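(* Let $\Phi:\mathbb{M}_k\to\mathbb{M}_n$ be a unital positive linear map. Then the map $A\mapsto\mathrm{Tr}\big[\Phi(A^p)^{-1/p}\big]$ on positive definite matrices $A\in\mathbb{M}_k$ is convex for all $p\in[-1,1]\setminus\{0\}$.
   Context: $\mathbb{M}_n$ denotes $n\times n$ complex matrices, $\mathrm{Tr}$ the trace. A linear map is positive if it maps positive semidefinite matrices to positive semidefinite matrices, and unital if $\Phi(I)=I$. *)

theory Defs
  imports Complex_Main "Jordan_Normal_Form.Schur_Decomposition"
begin

definition quad_form :: "complex mat \<Rightarrow> complex vec \<Rightarrow> complex" where
  "quad_form A v = conjugate v \<bullet> (A *\<^sub>v v)"

definition psd_mat :: "nat \<Rightarrow> complex mat \<Rightarrow> bool" where
  "psd_mat n A \<longleftrightarrow> A \<in> carrier_mat n n \<and>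
     (\<forall>v \<in> carrier_vec n. Im (quad_form A v) = 0 \<and> Re (quad_form A v) \<ge> 0)"

definition pd_mat :: "nat \<Rightarrow> complex mat \<Rightarrow> bool" where
  "pd_mat n A \<longleftrightarrow> A \<in> carrier_mat n n \<and>
     (\<forall>v \<in> carrier_vec n. v \<noteq> 0\<^sub>v n \<longrightarrow> Im (quad_form A v) = 0 \<and> Re (quad_form A v) > 0)"

definition real_diag_mat :: "nat \<Rightarrow> (nat \<Rightarrow> real) \<Rightarrow> complex mat" where
  "real_diag_mat n d = mat n n (\<lambda>(i,j). if i = j then complex_of_real (d i) else 0)"

definition unitary_mat :: "nat \<Rightarrow> complex mat \<Rightarrow> bool" where
  "unitary_mat n U \<longleftrightarrow> U \<in> carrier_mat n n \<and> mat_adjoint U * U = 1\<^sub>m n \<and> U * mat_adjoint U = 1\<^sub>m n"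

(* Real power A^r of a positive definite matrix via the functional calculus:
   if A = U diag(d) U^* with U unitary and d > 0, then A^r = U diag(d^r) U^*.
   (This is well defined, i.e. independent of the diagonalisation.) *)
definition mat_rpow :: "complex mat \<Rightarrow> real \<Rightarrow> complex mat" where
  "mat_rpow A r = (THE B. \<exists>U d. unitary_mat (dim_row A) U \<and> (\<forall>i < dim_row A. d i > 0) \<and>
       A = U * real_diag_mat (dim_row A) d * mat_adjoint U \<and>
       B = U * real_diag_mat (dim_row A) (\<lambda>i. d i powr r) * mat_adjoint U)"

definition trace_mat :: "complex mat \<Rightarrow> complex" where
  "trace_mat A = (\<Sum>i < dim_row A. A $$ (i,i))"

definition linear_mat_map :: "nat \<Rightarrow> nat \<Rightarrow> (complex mat \<Rightarrow> complex mat) \<Rightarrow> bool" where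
  "linear_mat_map k n \<Phi> \<longleftrightarrow>
     (\<forall>A \<in> carrier_mat k k. \<Phi> A \<in> carrier_mat n n) \<and>
     (\<forall>A \<in> carrier_mat k k. \<forall>B \<in> carrier_mat k k. \<Phi> (A + B) = \<Phi> A + \<Phi> B) \<and>
     (\<forall>c. \<forall>A \<in> carrier_mat k k. \<Phi> (c \<cdot>\<^sub>m A) = c \<cdot>\<^sub>m \<Phi> A)"

definition positive_mat_map :: "nat \<Rightarrow> nat \<Rightarrow> (complex mat \<Rightarrow> complex mat) \<Rightarrow> bool" where
  "positive_mat_map k n \<Phi> \<longleftrightarrow> (\<forall>A. psd_mat k A \<longrightarrow> psd_mat n (\<Phi> A))"

definition unital_mat_map :: "nat \<Rightarrow> nat \<Rightarrow> (complex mat \<Rightarrow> complex mat) \<Rightarrow> bool" where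
  "unital_mat_map k n \<Phi> \<longleftrightarrow> \<Phi> (1\<^sub>m k) = 1\<^sub>m n"

end

theory Submission
  imports Defs "Jordan_Normal_Form.Spectral_Radius" "HOL-Analysis.Analysis"
begin

lemma adj_dim[simp]: "dim_row (mat_adjoint A) = dim_col A" "dim_col (mat_adjoint A) = dim_row A"
  unfolding mat_adjoint_def by auto

lemma adj_index[simp]: "i < dim_col A \<Longrightarrow> j < dim_row A \<Longrightarrow> mat_adjoint A $$ (i,j) = cnj (A $$ (j,i))"
  unfolding mat_adjoint_def by (auto simp: mat_of_rows_def)

lemma adj_carrier[simp]: "A \<in> carrier_mat n m \<Longrightarrow> mat_adjoint A \<in> carrier_mat m n"
  by auto

lemma adj_adj[simp]: "mat_adjoint (mat_adjoint (A::complex mat)) = A"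
  by (rule eq_matI) auto

lemma adj_mult: assumes "(A::complex mat) \<in> carrier_mat n m" "B \<in> carrier_mat m l"
  shows "mat_adjoint (A*B) = mat_adjoint B * mat_adjoint A"
  using assms by (intro eq_matI) (auto simp: scalar_prod_def intro!: sum.cong)

lemma adj_ADJ: assumes "(U::complex mat) \<in> carrier_mat n n" "v \<in> carrier_vec n" "x \<in> carrier_vec n"
  shows "conjugate v \<bullet> (U *\<^sub>v x) = conjugate (mat_adjoint U *\<^sub>v v) \<bullet> x"
proof -
  have "conjugate v \<bullet> (U *\<^sub>v x) = (\<Sum>i<n. cnj (v$i) * (\<Sum>j<n. U$$(i,j) * x$j))"
    using assms by (simp add: scalar_prod_def mult_mat_vec_def atLeast0LessThan)
  also have "\<dots> = (\<Sum>j<n. (\<Sum>i<n. cnj (v$i) * U$$(i,j)) * x$j)"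
    by (simp add: sum_distrib_left sum_distrib_right mult.assoc mult.left_commute) (rule sum.swap)
  also have "\<dots> = conjugate (mat_adjoint U *\<^sub>v v) \<bullet> x"
    using assms by (simp add: scalar_prod_def mult_mat_vec_def atLeast0LessThan mult.commute)
  finally show ?thesis .
qed

lemma quad_form_sum: assumes "(A::complex mat) \<in> carrier_mat n n" "v \<in> carrier_vec n"
  shows "quad_form A v = (\<Sum>i<n. \<Sum>j<n. cnj (v$i) * A$$(i,j) * v$j)"
  using assms by (simp add: quad_form_def scalar_prod_def mult_mat_vec_def atLeast0LessThan
      sum_distrib_left mult.assoc)

lemma sum_two: assumes "i < (n::nat)" "j < n" "i \<noteq> j" "\<And>l. l \<noteq> i \<Longrightarrow> l \<noteq> j \<Longrightarrow> g l = (0::'a::comm_monoid_add)"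
  shows "(\<Sum>l<n. g l) = g i + g j"
proof -
  have "(\<Sum>l<n. g l) = (\<Sum>l\<in>{i,j}. g l)"
    using assms by (intro sum.mono_neutral_right) auto
  then show ?thesis using assms by simp
qed

lemma sum_one: assumes "i < (n::nat)" "\<And>l. l \<noteq> i \<Longrightarrow> g l = (0::'a::comm_monoid_add)"
  shows "(\<Sum>l<n. g l) = g i"
proof -
  have "(\<Sum>l<n. g l) = (\<Sum>l\<in>{i}. g l)"
    using assms by (intro sum.mono_neutral_right) auto
  then show ?thesis using assms by simp
qed

lemma quad_form_two: assumes A: "(A::complex mat) \<in> carrier_mat n n" and ij: "i < n" "j < n" "i \<noteq> j"
  shows "quad_form A (Matrix.vec n (\<lambda>l. if l = i then 1 else if l = j then c else 0))
    = A$$(i,i) + c * A$$(i,j) + cnj c * A$$(j,i) + cnj c * c * A$$(j,j)"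
proof -
  let ?f = "\<lambda>l. if l = i then 1 else if l = j then c else (0::complex)"
  have "quad_form A (Matrix.vec n ?f) = (\<Sum>a<n. \<Sum>b<n. cnj (?f a) * A$$(a,b) * ?f b)"
    by (subst quad_form_sum[OF A]) auto
  also have "\<dots> = (\<Sum>b<n. cnj (?f i) * A$$(i,b) * ?f b) + (\<Sum>b<n. cnj (?f j) * A$$(j,b) * ?f b)"
    by (rule sum_two[OF ij]) auto
  also have "(\<Sum>b<n. cnj (?f i) * A$$(i,b) * ?f b) = cnj (?f i) * A$$(i,i) * ?f i + cnj (?f i) * A$$(i,j) * ?f j"
    by (rule sum_two[OF ij]) auto
  also have "(\<Sum>b<n. cnj (?f j) * A$$(j,b) * ?f b) = cnj (?f j) * A$$(j,i) * ?f i + cnj (?f j) * A$$(j,j) * ?f j"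
    by (rule sum_two[OF ij]) auto
  finally show ?thesis using ij by (simp add: algebra_simps)
qed

lemma quad_form_one: assumes A: "(A::complex mat) \<in> carrier_mat n n" and ij: "i < n"
  shows "quad_form A (Matrix.vec n (\<lambda>l. if l = i then 1 else 0)) = A$$(i,i)"
proof -
  let ?f = "\<lambda>l. if l = i then 1 else (0::complex)"
  have "quad_form A (Matrix.vec n ?f) = (\<Sum>a<n. \<Sum>b<n. cnj (?f a) * A$$(a,b) * ?f b)"
    by (subst quad_form_sum[OF A]) auto
  also have "\<dots> = (\<Sum>b<n. cnj (?f i) * A$$(i,b) * ?f b)"
    by (rule sum_one[OF ij]) auto
  also have "\<dots> = cnj (?f i) * A$$(i,i) * ?f i"
    by (rule sum_one[OF ij]) auto
  finally show ?thesis by simp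
qed

definition herm :: "nat \<Rightarrow> complex mat \<Rightarrow> bool" where
  "herm n A \<longleftrightarrow> A \<in> carrier_mat n n \<and> (\<forall>i<n. \<forall>j<n. A$$(i,j) = cnj (A$$(j,i)))"

lemma real_quad_herm: assumes A: "(A::complex mat) \<in> carrier_mat n n"
  and re: "\<And>v. v \<in> carrier_vec n \<Longrightarrow> Im (quad_form A v) = 0"
  shows "herm n A"
  unfolding herm_def
proof (intro conjI allI impI A)
  fix i j assume i: "i < n" and j: "j < n"
  have diag: "Im (A$$(l,l)) = 0" if "l < n" for l
    using re[of "Matrix.vec n (\<lambda>m. if m = l then 1 else 0)"] quad_form_one[OF A that] by auto
  show "A$$(i,j) = cnj (A$$(j,i))"
  proof (cases "i = j")
    case True then show ?thesis using diag[OF i] by (simp add: complex_eq_iff)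
  next
    case False
    have 1: "Im (A$$(i,j) + A$$(j,i)) = 0"
      using re[of "Matrix.vec n (\<lambda>l. if l = i then 1 else if l = j then 1 else 0)"]
        quad_form_two[OF A i j False, of 1] diag[OF i] diag[OF j] by simp
    have 2: "Re (A$$(i,j)) - Re (A$$(j,i)) = 0"
      using re[of "Matrix.vec n (\<lambda>l. if l = i then 1 else if l = j then \<i> else 0)"]
        quad_form_two[OF A i j False, of \<i>] diag[OF i] diag[OF j] by simp
    show ?thesis using 1 2 by (simp add: complex_eq_iff)
  qed
qed

lemma pd_herm: "pd_mat n A \<Longrightarrow> herm n A"
proof -
  assume pd: "pd_mat n A"
  then have A: "A \<in> carrier_mat n n" unfolding pd_mat_def by auto
  show ?thesis
  proof (rule real_quad_herm[OF A])
    fix v :: "complex Matrix.vec" assume v: "v \<in> carrier_vec n"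
    show "Im (quad_form A v) = 0"
    proof (cases "v = 0\<^sub>v n")
      case True then show ?thesis using A by (simp add: quad_form_def)
    next
      case False then show ?thesis using pd v unfolding pd_mat_def by auto
    qed
  qed
qed

lemma psd_herm: "psd_mat n A \<Longrightarrow> herm n A"
  unfolding psd_mat_def using real_quad_herm by auto

lemma rdiag_carrier[simp]: "real_diag_mat n d \<in> carrier_mat n n"
  unfolding real_diag_mat_def by auto

lemma rdiag_dim[simp]: "dim_row (real_diag_mat n d) = n" "dim_col (real_diag_mat n d) = n"
  unfolding real_diag_mat_def by auto

lemma rdiag_index[simp]: "i < n \<Longrightarrow> j < n \<Longrightarrow> real_diag_mat n d $$ (i,j) = (if i = j then complex_of_real (d i) else 0)"
  unfolding real_diag_mat_def by auto

lemma rdiag_mv_carrier[simp]: "real_diag_mat n d *\<^sub>v y \<in> carrier_vec n"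
  by (intro carrier_vecI) simp

lemma rdiag_mult_vec: assumes "y \<in> carrier_vec n" "l < n"
  shows "(real_diag_mat n d *\<^sub>v y) $ l = complex_of_real (d l) * y $ l"
proof -
  have "(real_diag_mat n d *\<^sub>v y) $ l = (\<Sum>m<n. (if l = m then complex_of_real (d l) else 0) * y $ m)"
    using assms by (simp add: mult_mat_vec_def scalar_prod_def atLeast0LessThan)
  also have "\<dots> = complex_of_real (d l) * y $ l"
    by (rule trans[OF sum_one[OF assms(2)]]) auto
  finally show ?thesis .
qed

lemma cnj_mult_self: "cnj z * z = complex_of_real ((cmod z)^2)"
  by (subst complex_norm_square) (rule mult.commute)

lemma adj_mv_carrier[simp]: "U \<in> carrier_mat n n \<Longrightarrow> mat_adjoint U *\<^sub>v v \<in> carrier_vec n"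
  by (intro carrier_vecI) (simp add: carrier_matD)

lemma sprod_self: assumes "(y::complex Matrix.vec) \<in> carrier_vec n"
  shows "conjugate y \<bullet> y = complex_of_real (\<Sum>l<n. (cmod (y$l))^2)"
  using assms by (simp add: scalar_prod_def atLeast0LessThan cnj_mult_self)

lemma quad_diag: assumes U: "(U::complex mat) \<in> carrier_mat n n" and v: "v \<in> carrier_vec n"
  shows "quad_form (U * real_diag_mat n d * mat_adjoint U) v
     = complex_of_real (\<Sum>l<n. d l * (cmod ((mat_adjoint U *\<^sub>v v) $ l))^2)"
proof -
  define y where "y = mat_adjoint U *\<^sub>v v"
  have y: "y \<in> carrier_vec n" using U v unfolding y_def by auto
  have "(U * real_diag_mat n d * mat_adjoint U) *\<^sub>v v = U *\<^sub>v (real_diag_mat n d *\<^sub>v y)"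
    unfolding y_def using U v
    by (simp add: assoc_mult_mat_vec[of _ n n _ n])
  then have "quad_form (U * real_diag_mat n d * mat_adjoint U) v = conjugate v \<bullet> (U *\<^sub>v (real_diag_mat n d *\<^sub>v y))"
    unfolding quad_form_def by simp
  also have "\<dots> = conjugate y \<bullet> (real_diag_mat n d *\<^sub>v y)"
    unfolding y_def by (rule adj_ADJ[OF U v]) (use U v in auto)
  also have "\<dots> = (\<Sum>l<n. cnj (y$l) * (complex_of_real (d l) * y $ l))"
    using y by (simp add: scalar_prod_def atLeast0LessThan rdiag_mult_vec del: index_mult_mat_vec)
  also have "\<dots> = complex_of_real (\<Sum>l<n. d l * (cmod (y$l))^2)"
    by (simp add: cnj_mult_self mult.left_commute)
  finally show ?thesis unfolding y_def .
qed

lemma unitary_carrier: "unitary_mat n U \<Longrightarrow> U \<in> carrier_mat n n"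
  unfolding unitary_mat_def by auto

lemma unitary_adj: "unitary_mat n U \<Longrightarrow> unitary_mat n (mat_adjoint U)"
  unfolding unitary_mat_def by auto

lemma unitary_cancel1: assumes "unitary_mat n U" "X \<in> carrier_mat n m"
  shows "mat_adjoint U * (U * X) = X"
proof -
  have "mat_adjoint U * (U * X) = (mat_adjoint U * U) * X"
    using assms unitary_carrier[OF assms(1)] by (simp add: assoc_mult_mat[of _ n n _ n _ m])
  then show ?thesis using assms unfolding unitary_mat_def by auto
qed

lemma unitary_cancel2: assumes "unitary_mat n U" "X \<in> carrier_mat n m"
  shows "U * (mat_adjoint U * X) = X"
proof -
  have "U * (mat_adjoint U * X) = (U * mat_adjoint U) * X"
    using assms unitary_carrier[OF assms(1)] by (simp add: assoc_mult_mat[of _ n n _ n _ m])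
  then show ?thesis using assms unfolding unitary_mat_def by auto
qed

lemma unitary_mult: assumes U: "unitary_mat n U" and V: "unitary_mat n V"
  shows "unitary_mat n (U * V)"
proof -
  have Uc: "U \<in> carrier_mat n n" and Vc: "V \<in> carrier_mat n n" using U V unitary_carrier by auto
  have "mat_adjoint (U*V) * (U*V) = mat_adjoint V * (mat_adjoint U * (U * V))"
    using Uc Vc by (simp add: adj_mult[OF Uc Vc] assoc_mult_mat[of _ n n _ n _ n])
  also have "\<dots> = 1\<^sub>m n" using U V Vc unitary_cancel1[OF U Vc] unfolding unitary_mat_def by auto
  finally have 1: "mat_adjoint (U*V) * (U*V) = 1\<^sub>m n" .
  have c1: "mat_adjoint V * mat_adjoint U \<in> carrier_mat n n" using Uc Vc by (meson adj_carrier mult_carrier_mat)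
  have "(U*V) * mat_adjoint (U*V) = U * (V * (mat_adjoint V * mat_adjoint U))"
    unfolding adj_mult[OF Uc Vc] by (rule assoc_mult_mat[OF Uc Vc c1])
  also have "\<dots> = 1\<^sub>m n" using U V Uc unitary_cancel2[OF V, of "mat_adjoint U" n] unfolding unitary_mat_def by auto
  finally show ?thesis using 1 Uc Vc unfolding unitary_mat_def by auto
qed

lemma unitary_pres: assumes U: "unitary_mat n U" and u: "u \<in> carrier_vec n" and v: "v \<in> carrier_vec n"
  shows "conjugate (mat_adjoint U *\<^sub>v v) \<bullet> (mat_adjoint U *\<^sub>v u) = conjugate v \<bullet> u"
proof -
  have Uc: "U \<in> carrier_mat n n" using U unitary_carrier by auto
  have h: "U *\<^sub>v (mat_adjoint U *\<^sub>v u) = u"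
    using U Uc u unfolding unitary_mat_def by (simp add: assoc_mult_mat_vec[symmetric, of _ n n _ n])
  have "conjugate v \<bullet> u = conjugate v \<bullet> (U *\<^sub>v (mat_adjoint U *\<^sub>v u))" by (simp only: h)
  also have "\<dots> = conjugate (mat_adjoint U *\<^sub>v v) \<bullet> (mat_adjoint U *\<^sub>v u)"
    by (rule adj_ADJ[OF Uc v adj_mv_carrier[OF Uc]])
  finally show ?thesis by simp
qed

lemma unitary_norm: assumes U: "unitary_mat n U" and v: "v \<in> carrier_vec n"
  shows "(\<Sum>l<n. (cmod ((mat_adjoint U *\<^sub>v v) $ l))^2) = (\<Sum>l<n. (cmod (v $ l))^2)"
proof -
  have Uc: "U \<in> carrier_mat n n" using U unitary_carrier by auto
  have "complex_of_real (\<Sum>l<n. (cmod ((mat_adjoint U *\<^sub>v v) $ l))^2)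
     = conjugate (mat_adjoint U *\<^sub>v v) \<bullet> (mat_adjoint U *\<^sub>v v)"
    by (rule sprod_self[symmetric]) (simp add: Uc)
  also have "\<dots> = conjugate v \<bullet> v" by (rule unitary_pres[OF U v v])
  also have "\<dots> = complex_of_real (\<Sum>l<n. (cmod (v $ l))^2)" by (rule sprod_self[OF v])
  finally show ?thesis by (simp only: of_real_eq_iff)
qed

lemma mult_entry: assumes "(M1::complex mat) \<in> carrier_mat a b" "M2 \<in> carrier_mat b c" "i < a" "j < c"
  shows "(M1 * M2) $$ (i,j) = (\<Sum>k<b. M1$$(i,k) * M2$$(k,j))"
  using assms by (simp add: scalar_prod_def atLeast0LessThan)

lemma herm_adj: "herm n A \<longleftrightarrow> A \<in> carrier_mat n n \<and> mat_adjoint A = A"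
proof
  assume h: "herm n A" 
  then have A: "A \<in> carrier_mat n n" unfolding herm_def by simp
  have "mat_adjoint A = A"
  proof (rule eq_matI)
    fix i j assume ij: "i < dim_row A" "j < dim_col A"
    then have "A $$ (j,i) = cnj (A $$ (i,j))" using h A unfolding herm_def by blast
    then show "mat_adjoint A $$ (i,j) = A $$ (i,j)" using ij A by simp
  qed (use A in simp_all)
  then show "A \<in> carrier_mat n n \<and> mat_adjoint A = A" using A by simp
next
  assume a: "A \<in> carrier_mat n n \<and> mat_adjoint A = A"
  show "herm n A" unfolding herm_def
  proof (intro conjI allI impI)
    fix i j assume "i < n" "j < n"
    then have "mat_adjoint A $$ (i,j) = cnj (A $$ (j,i))" using a[THEN conjunct1] by (intro adj_index) simp_all
    then show "A $$ (i,j) = cnj (A $$ (j,i))" by (simp only: a[THEN conjunct2])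
  qed (use a in simp)
qed

definition extc :: "nat \<Rightarrow> complex \<Rightarrow> complex mat \<Rightarrow> complex mat" where
  "extc m c X = Matrix.mat (Suc m) (Suc m) (\<lambda>(i,j). if i = 0 \<and> j = 0 then c else if i = 0 \<or> j = 0 then 0 else X $$ (i-1, j-1))"

lemma extc_carrier[simp]: "extc m c X \<in> carrier_mat (Suc m) (Suc m)"
  "dim_row (extc m c X) = Suc m" "dim_col (extc m c X) = Suc m"
  unfolding extc_def by simp_all

lemma extc_index: "i < Suc m \<Longrightarrow> j < Suc m \<Longrightarrow> extc m c X $$ (i,j) = (if i = 0 \<and> j = 0 then c else if i = 0 \<or> j = 0 then 0 else X $$ (i-1, j-1))"
  unfolding extc_def by simp

lemma extc_mult: assumes X: "X \<in> carrier_mat m m" and Y: "Y \<in> carrier_mat m m"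
  shows "extc m c X * extc m c' Y = extc m (c*c') (X*Y)"
proof (rule eq_matI)
  fix i j assume i: "i < dim_row (extc m (c*c') (X*Y))" and j: "j < dim_col (extc m (c*c') (X*Y))"
  then have i': "i < Suc m" and j': "j < Suc m" by simp_all
  have "(extc m c X * extc m c' Y) $$ (i,j) = (\<Sum>k<Suc m. extc m c X $$ (i,k) * extc m c' Y $$ (k,j))"
    by (rule mult_entry[OF extc_carrier(1) extc_carrier(1) i' j'])
  also have "\<dots> = extc m c X $$ (i,0) * extc m c' Y $$ (0,j) + (\<Sum>k<m. extc m c X $$ (i,Suc k) * extc m c' Y $$ (Suc k,j))"
    by (rule sum.lessThan_Suc_shift)
  also have "\<dots> = extc m (c*c') (X*Y) $$ (i,j)"
  proof (cases i)
    case 0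
    then show ?thesis using j' by (cases j) (simp_all add: extc_index)
  next
    case (Suc i1)
    show ?thesis
    proof (cases j)
      case 0 then show ?thesis using i' Suc by (simp add: extc_index)
    next
      case (Suc j1)
      have "(X*Y) $$ (i1, j1) = (\<Sum>k<m. X$$(i1,k) * Y$$(k,j1))"
        by (rule mult_entry[OF X Y]) (use i' j' \<open>i = Suc i1\<close> Suc in simp_all)
      then show ?thesis using i' j' \<open>i = Suc i1\<close> Suc by (simp add: extc_index)
    qed
  qed
  finally show "(extc m c X * extc m c' Y) $$ (i,j) = extc m (c*c') (X*Y) $$ (i,j)" .
qed simp_all

lemma extc_adj: assumes X: "X \<in> carrier_mat m m"
  shows "mat_adjoint (extc m c X) = extc m (cnj c) (mat_adjoint X)"
  using X by (intro eq_matI) (simp_all add: extc_index)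

lemma extc_one: "extc m 1 (1\<^sub>m m) = 1\<^sub>m (Suc m)"
  apply (intro eq_matI)
  apply (simp_all add: extc_index)
  apply presburger
  done

lemma extc_rdiag: "extc m (complex_of_real r) (real_diag_mat m d) = real_diag_mat (Suc m) (\<lambda>i. if i = 0 then r else d (i-1))"
  apply (intro eq_matI)
  apply (simp_all add: extc_index)
  apply presburger
  done

lemma extc_unitary: assumes U: "unitary_mat m V" shows "unitary_mat (Suc m) (extc m 1 V)"
proof -
  have V: "V \<in> carrier_mat m m" using U unitary_carrier by blast
  have a1: "mat_adjoint V * V = 1\<^sub>m m" and a2: "V * mat_adjoint V = 1\<^sub>m m"
    using U unfolding unitary_mat_def by simp_all
  have Va: "mat_adjoint V \<in> carrier_mat m m" using V by simp
  have "mat_adjoint (extc m 1 V) * extc m 1 V = 1\<^sub>m (Suc m)"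
    unfolding extc_adj[OF V] extc_mult[OF Va V] a1 by (simp add: extc_one)
  moreover have "extc m 1 V * mat_adjoint (extc m 1 V) = 1\<^sub>m (Suc m)"
    unfolding extc_adj[OF V] extc_mult[OF V Va] a2 by (simp add: extc_one)
  ultimately show ?thesis unfolding unitary_mat_def by simp
qed

lemma conj_back: assumes W: "unitary_mat n W" and A: "A \<in> carrier_mat n n"
  shows "W * (mat_adjoint W * A * W) * mat_adjoint W = A"
proof -
  have Wc: "W \<in> carrier_mat n n" using W unitary_carrier by blast
  have WW: "W * mat_adjoint W = 1\<^sub>m n" using W unfolding unitary_mat_def by simp
  have Wa: "mat_adjoint W \<in> carrier_mat n n" using Wc by simp
  have WA: "mat_adjoint W * A \<in> carrier_mat n n" using Wa A by (rule mult_carrier_mat)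
  have X: "mat_adjoint W * A * W \<in> carrier_mat n n" using WA Wc by (rule mult_carrier_mat)
  have "W * (mat_adjoint W * A * W) * mat_adjoint W = W * ((mat_adjoint W * A * W) * mat_adjoint W)"
    by (rule assoc_mult_mat[OF Wc X Wa])
  also have "(mat_adjoint W * A * W) * mat_adjoint W = (mat_adjoint W * A) * (W * mat_adjoint W)"
    by (rule assoc_mult_mat[OF WA Wc Wa])
  also have "\<dots> = mat_adjoint W * A" unfolding WW by (rule right_mult_one_mat[OF WA])
  also have "W * (mat_adjoint W * A) = A" by (rule unitary_cancel2[OF W A])
  finally show ?thesis .
qed

lemma sum_cnj_sq: "(\<Sum>l\<in>S. w l * cnj (w l)) = complex_of_real (\<Sum>l\<in>S. (cmod (w l))^2)"
  unfolding of_real_sum complex_norm_square ..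

lemma orthonormal_completion:
  fixes v :: "complex Matrix.vec"
  assumes v: "v \<in> carrier_vec n" and v0: "v \<noteq> 0\<^sub>v n" and n: "n = Suc m"
  shows "\<exists>W. unitary_mat n W \<and> (\<exists>c>0. \<forall>i<n. W $$ (i,0) = v $ i / complex_of_real c)"
proof -
  interpret cof_vec_space n "TYPE(complex)" .
  define b where "b = basis_completion v"
  from basis_completion[OF v v0, folded b_def]
  have dist_b: "distinct b" 
    and indep: "\<not> lin_dep (set b)" and b: "set b \<subseteq> carrier_vec n" and hdb: "hd b = v" 
    and len_b: "length b = n" by auto
  define ws where "ws = gram_schmidt n b"
  from gram_schmidt_result[OF b dist_b indep refl, folded ws_def]
  have ws: "set ws \<subseteq> carrier_vec n" "corthogonal ws" "length ws = n" 
    by (auto simp: len_b)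
  from hdb len_b n obtain vs where bv: "b = v # vs" by (cases b, auto)
  from gram_schmidt_hd[OF v, of vs, folded bv] have hdws: "hd ws = v" unfolding ws_def .
  have ws0: "ws ! 0 = v" using hdws ws(3) n by (cases ws) auto
  have wsc: "ws ! j \<in> carrier_vec n" if "j < n" for j using ws that by auto
  define nr where "nr j = sqrt (\<Sum>l<n. (cmod ((ws!j)$l))^2)" for j
  have cs: "ws ! j \<bullet>c ws ! i = (\<Sum>l<n. (ws!j)$l * cnj ((ws!i)$l))" if "i < n" "j < n" for i j
    using wsc[OF that(1)] wsc[OF that(2)] by (simp add: scalar_prod_def atLeast0LessThan)
  have nrpos: "nr j > 0" if j: "j < n" for j
  proof -
    have "ws ! j \<bullet>c ws ! j \<noteq> 0" using ws(2) ws(3) j unfolding corthogonal_def by blast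
    then have "(\<Sum>l<n. (ws!j)$l * cnj ((ws!j)$l)) \<noteq> 0" using cs[OF j j] by simp
    then have "(\<Sum>l<n. (cmod ((ws!j)$l))^2) \<noteq> 0" unfolding sum_cnj_sq by (metis of_real_0)
    moreover have "(\<Sum>l<n. (cmod ((ws!j)$l))^2) \<ge> 0" by (intro sum_nonneg) simp
    ultimately show ?thesis unfolding nr_def by simp
  qed
  define W where "W = Matrix.mat n n (\<lambda>(i,j). (ws!j)$i / complex_of_real (nr j))"
  have Wc: "W \<in> carrier_mat n n" unfolding W_def by simp
  have WW: "mat_adjoint W * W = 1\<^sub>m n"
  proof (rule eq_matI)
    fix i j assume i: "i < dim_row (1\<^sub>m n)" and j: "j < dim_col (1\<^sub>m n)"
    then have i: "i < n" and j: "j < n" by simp_all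
    have "(mat_adjoint W * W) $$ (i,j) = (\<Sum>l<n. mat_adjoint W $$ (i,l) * W $$ (l,j))"
      by (rule mult_entry[OF adj_carrier[OF Wc] Wc i j])
    also have "\<dots> = (\<Sum>l<n. (ws!j)$l * cnj ((ws!i)$l)) / complex_of_real (nr i * nr j)"
      using i j Wc unfolding W_def by (simp add: sum_divide_distrib field_simps)
    also have "\<dots> = (ws!j \<bullet>c ws!i) / complex_of_real (nr i * nr j)" using cs[OF i j] by simp
    also have "\<dots> = 1\<^sub>m n $$ (i,j)"
    proof (cases "i = j")
      case True
      have "(\<Sum>l<n. (ws!j)$l * cnj ((ws!j)$l)) = complex_of_real ((nr j)^2)"
        unfolding nr_def sum_cnj_sq by (simp add: sum_nonneg)
      then show ?thesis using True cs[OF j j] nrpos[OF j] i by (simp add: power2_eq_square)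
    next
      case False
      have "ws ! j \<bullet>c ws ! i = 0" using ws(2) ws(3) i j False unfolding corthogonal_def by blast
      then show ?thesis using False i j by simp
    qed
    finally show "(mat_adjoint W * W) $$ (i,j) = 1\<^sub>m n $$ (i,j)" .
  qed (use Wc in simp_all)
  have WW2: "W * mat_adjoint W = 1\<^sub>m n"
    by (rule mat_mult_left_right_inverse[OF adj_carrier[OF Wc] Wc WW])
  have "unitary_mat n W" unfolding unitary_mat_def using Wc WW WW2 by simp
  moreover have "\<forall>i<n. W $$ (i,0) = v $ i / complex_of_real (nr 0)"
    unfolding W_def using n ws0 by simp
  moreover have "nr 0 > 0" using nrpos n by simp
  ultimately show ?thesis by blast
qed

lemma mult_carrier_sq: "A \<in> carrier_mat n n \<Longrightarrow> B \<in> carrier_mat n n \<Longrightarrow> A * B \<in> carrier_mat n n"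
  by (rule mult_carrier_mat)

lemma assoc5: assumes "W \<in> carrier_mat n n" "E \<in> carrier_mat n n" "D \<in> carrier_mat n n" "F \<in> carrier_mat n n" "G \<in> carrier_mat n n"
  shows "(W*E)*D*(F*G) = W*(E*D*F)*G"
  using assms by (simp add: assoc_mult_mat[of _ n n _ n _ n] mult_carrier_sq)

lemma spectral: "herm n A \<Longrightarrow> \<exists>U d. unitary_mat n U \<and> A = U * real_diag_mat n d * mat_adjoint U"
proof (induction n arbitrary: A)
  case 0
  then have A: "A \<in> carrier_mat 0 0" unfolding herm_def by simp
  have "mat_adjoint (1\<^sub>m 0) * 1\<^sub>m 0 = (1\<^sub>m 0 :: complex mat)" by (intro eq_matI) simp_all
  then have u: "unitary_mat 0 (1\<^sub>m 0)" unfolding unitary_mat_def by simp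
  have "A = 1\<^sub>m 0 * real_diag_mat 0 (\<lambda>_. 0) * mat_adjoint (1\<^sub>m 0)" using A by (intro eq_matI) simp_all
  then show ?case using u by blast
next
  case (Suc m)
  define n where "n = Suc m"
  have A: "A \<in> carrier_mat n n" and hA: "mat_adjoint A = A" using Suc.prems unfolding herm_adj n_def by simp_all
  have "spectrum A \<noteq> {}" by (rule spectrum_non_empty[OF A]) (simp add: n_def)
  then obtain e where "eigenvalue A e" unfolding spectrum_def by auto
  then obtain v where ev: "eigenvector A v e" unfolding eigenvalue_def by blast
  then have v: "v \<in> carrier_vec n" and v0: "v \<noteq> 0\<^sub>v n" and Av: "A *\<^sub>v v = e \<cdot>\<^sub>v v"
    using A unfolding eigenvector_def by simp_all
  obtain W c where W: "unitary_mat n W" and c: "c > 0" and Wc0: "\<forall>i<n. W $$ (i,0) = v $ i / complex_of_real c"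
    using orthonormal_completion[OF v v0 n_def] by blast
  have Wc: "W \<in> carrier_mat n n" using W unitary_carrier by blast
  have Wa: "mat_adjoint W \<in> carrier_mat n n" using Wc by simp
  have WW: "mat_adjoint W * W = 1\<^sub>m n" using W unfolding unitary_mat_def by simp
  define A' where "A' = mat_adjoint W * A * W"
  have A'c: "A' \<in> carrier_mat n n" unfolding A'_def using Wc Wa A by (simp add: mult_carrier_sq)
  have A'2: "A' = mat_adjoint W * (A * W)" unfolding A'_def by (rule assoc_mult_mat[OF Wa A Wc])
  have hA': "mat_adjoint A' = A'"
  proof -
    have "mat_adjoint A' = mat_adjoint (A * W) * mat_adjoint (mat_adjoint W)"
      unfolding A'2 by (rule adj_mult[OF Wa mult_carrier_sq[OF A Wc]])
    also have "\<dots> = mat_adjoint W * A * W" by (simp add: adj_mult[OF A Wc] hA)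
    finally show ?thesis unfolding A'_def .
  qed
  have hA'i: "A' $$ (i,j) = cnj (A' $$ (j,i))" if "i < n" "j < n" for i j
  proof -
    have "mat_adjoint A' $$ (i,j) = cnj (A' $$ (j,i))" using A'c that by (intro adj_index) simp_all
    then show ?thesis by (simp only: hA')
  qed
  have col0: "A' $$ (i,0) = (if i = 0 then e else 0)" if i: "i < n" for i
  proof -
    have AW: "(A * W) $$ (l, 0) = e * W $$ (l,0)" if l: "l < n" for l
    proof -
      have "(A * W) $$ (l,0) = (\<Sum>k<n. A $$ (l,k) * W $$ (k,0))" by (rule mult_entry[OF A Wc l]) (simp add: n_def)
      also have "\<dots> = (\<Sum>k<n. A $$ (l,k) * v $ k) / complex_of_real c" using Wc0 by (simp add: sum_divide_distrib)
      also have "(\<Sum>k<n. A $$ (l,k) * v $ k) = (A *\<^sub>v v) $ l" using A v l by (simp add: scalar_prod_def atLeast0LessThan)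
      also have "\<dots> = e * v $ l" using Av l v by simp
      finally show ?thesis using Wc0 l n_def by simp
    qed
    have "A' $$ (i,0) = (\<Sum>l<n. mat_adjoint W $$ (i,l) * (A * W) $$ (l,0))"
      unfolding A'2 by (rule mult_entry[OF Wa mult_carrier_sq[OF A Wc] i]) (simp add: n_def)
    also have "\<dots> = e * (\<Sum>l<n. mat_adjoint W $$ (i,l) * W $$ (l,0))"
      using AW by (simp add: sum_distrib_left mult.left_commute)
    also have "(\<Sum>l<n. mat_adjoint W $$ (i,l) * W $$ (l,0)) = (mat_adjoint W * W) $$ (i,0)"
      by (rule mult_entry[symmetric, OF Wa Wc i]) (simp add: n_def)
    also have "\<dots> = (if i = 0 then 1 else 0)" unfolding WW using i n_def by simp
    finally show ?thesis by simp
  qed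
  have e0: "A' $$ (0,0) = e" using col0[of 0] n_def by simp
  have "cnj e = e" using hA'i[of 0 0] e0 n_def by simp
  then have e_real: "e = complex_of_real (Re e)" by (simp add: complex_eq_iff)
  define A3 where "A3 = Matrix.mat m m (\<lambda>(i,j). A' $$ (Suc i, Suc j))"
  have hA3: "herm m A3" unfolding herm_def
  proof (intro conjI allI impI)
    fix i j assume i: "i < m" and j: "j < m"
    have "A' $$ (Suc i, Suc j) = cnj (A' $$ (Suc j, Suc i))" using i j n_def by (intro hA'i) simp_all
    then show "A3 $$ (i,j) = cnj (A3 $$ (j,i))" unfolding A3_def using i j by simp
  qed (simp add: A3_def)
  obtain V d' where V: "unitary_mat m V" and A3d: "A3 = V * real_diag_mat m d' * mat_adjoint V"
    using Suc.IH[OF hA3] by blast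
  have Vc: "V \<in> carrier_mat m m" using V unitary_carrier by blast
  have A'ext: "A' = extc m (complex_of_real (Re e)) A3"
  proof (rule eq_matI)
    fix i j assume i: "i < dim_row (extc m (complex_of_real (Re e)) A3)" and j: "j < dim_col (extc m (complex_of_real (Re e)) A3)"
    then have i: "i < n" and j: "j < n" using n_def by simp_all
    show "A' $$ (i,j) = extc m (complex_of_real (Re e)) A3 $$ (i,j)"
    proof (cases j)
      case 0 then show ?thesis using col0[OF i] i n_def e_real by (simp add: extc_index)
    next
      case (Suc j1)
      show ?thesis
      proof (cases i)
        case 0
        have "A' $$ (0,j) = cnj (A' $$ (j,0))" using hA'i[of 0 j] j n_def by simp
        then show ?thesis using col0[OF j] 0 Suc j n_def by (simp add: extc_index)
      next
        case (Suc i1)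
        then show ?thesis using \<open>j = Suc j1\<close> i j n_def by (simp add: extc_index A3_def)
      qed
    qed
  qed (use A'c n_def in simp_all)
  define E where "E = extc m 1 V"
  define d where "d = (\<lambda>i. if i = 0 then Re e else d' (i-1))"
  have E: "unitary_mat n E" using extc_unitary[OF V] n_def E_def by simp
  have Ec: "E \<in> carrier_mat n n" using E unitary_carrier by blast
  have EDE: "E * real_diag_mat n d * mat_adjoint E = A'"
  proof -
    have Va: "mat_adjoint V \<in> carrier_mat m m" using Vc by simp
    have VD: "V * real_diag_mat m d' \<in> carrier_mat m m" using Vc by (simp add: mult_carrier_sq)
    have "E * real_diag_mat n d * mat_adjoint E
      = extc m 1 V * extc m (complex_of_real (Re e)) (real_diag_mat m d') * extc m 1 (mat_adjoint V)"
      unfolding E_def d_def n_def extc_rdiag extc_adj[OF Vc] by simp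
    also have "\<dots> = extc m (complex_of_real (Re e)) A3"
      unfolding extc_mult[OF Vc rdiag_carrier] extc_mult[OF VD Va] A3d by simp
    finally show ?thesis using A'ext by simp
  qed
  have "W * E * real_diag_mat n d * mat_adjoint (W * E) = W * (E * real_diag_mat n d * mat_adjoint E) * mat_adjoint W"
    unfolding adj_mult[OF Wc Ec] by (rule assoc5[OF Wc Ec rdiag_carrier adj_carrier[OF Ec] adj_carrier[OF Wc]])
  also have "\<dots> = A" unfolding EDE A'_def by (rule conj_back[OF W A])
  finally have "A = (W * E) * real_diag_mat n d * mat_adjoint (W * E)" by simp
  moreover have "unitary_mat n (W * E)" by (rule unitary_mult[OF W E])
  ultimately show ?case unfolding n_def by blast
qed

lemma sum_one': assumes "i < (n::nat)" "\<And>l. l < n \<Longrightarrow> l \<noteq> i \<Longrightarrow> g l = (0::'a::comm_monoid_add)"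
  shows "(\<Sum>l<n. g l) = g i"
proof -
  have "(\<Sum>l<n. g l) = (\<Sum>l\<in>{i}. g l)"
    using assms by (intro sum.mono_neutral_right) auto
  then show ?thesis using assms by simp
qed

lemma mult_rdiag_right: assumes "X \<in> carrier_mat n n" "i < n" "j < n"
  shows "(X * real_diag_mat n d) $$ (i,j) = X $$ (i,j) * complex_of_real (d j)"
proof -
  have "(X * real_diag_mat n d) $$ (i,j) = (\<Sum>k<n. X $$ (i,k) * real_diag_mat n d $$ (k,j))"
    by (rule mult_entry[OF assms(1) rdiag_carrier assms(2,3)])
  also have "\<dots> = X $$ (i,j) * real_diag_mat n d $$ (j,j)"
    by (rule sum_one'[OF assms(3)]) (use assms in simp)
  finally show ?thesis using assms by simp
qed

lemma mult_rdiag_left: assumes "X \<in> carrier_mat n n" "i < n" "j < n"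
  shows "(real_diag_mat n d * X) $$ (i,j) = complex_of_real (d i) * X $$ (i,j)"
proof -
  have "(real_diag_mat n d * X) $$ (i,j) = (\<Sum>k<n. real_diag_mat n d $$ (i,k) * X $$ (k,j))"
    by (rule mult_entry[OF rdiag_carrier assms(1) assms(2,3)])
  also have "\<dots> = real_diag_mat n d $$ (i,i) * X $$ (i,j)"
    by (rule sum_one'[OF assms(2)]) (use assms in simp)
  finally show ?thesis using assms by simp
qed

lemma rpow_unique:
  assumes U: "unitary_mat n U" and V: "unitary_mat n V"
    and H: "U * real_diag_mat n d * mat_adjoint U = V * real_diag_mat n e * mat_adjoint V"
  shows "U * real_diag_mat n (\<lambda>i. f (d i)) * mat_adjoint U = V * real_diag_mat n (\<lambda>i. f (e i)) * mat_adjoint V"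
proof -
  have Uc: "U \<in> carrier_mat n n" using U unitary_carrier by blast
  have Vc: "V \<in> carrier_mat n n" using V unitary_carrier by blast
  have Ua: "mat_adjoint U \<in> carrier_mat n n" using Uc by simp
  have Va: "mat_adjoint V \<in> carrier_mat n n" using Vc by simp
  have UU: "mat_adjoint U * U = 1\<^sub>m n" using U unfolding unitary_mat_def by simp
  define W where "W = mat_adjoint V * U"
  have Wc: "W \<in> carrier_mat n n" unfolding W_def using Va Uc by (rule mult_carrier_sq)
  note simps = assoc_mult_mat[of _ n n _ n _ n] mult_carrier_sq Uc Vc Ua Va
  have "mat_adjoint V * (U * real_diag_mat n d * mat_adjoint U) * U = W * real_diag_mat n d"
  proof -
    have "mat_adjoint V * (U * real_diag_mat n d * mat_adjoint U) * U
       = mat_adjoint V * (U * (real_diag_mat n d * (mat_adjoint U * U)))"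
      by (simp add: simps)
    also have "\<dots> = mat_adjoint V * (U * real_diag_mat n d)" by (simp add: UU)
    also have "\<dots> = W * real_diag_mat n d" unfolding W_def by (simp add: simps)
    finally show ?thesis .
  qed
  moreover have "mat_adjoint V * (V * real_diag_mat n e * mat_adjoint V) * U = real_diag_mat n e * W"
  proof -
    have "mat_adjoint V * (V * real_diag_mat n e * mat_adjoint V) * U
       = mat_adjoint V * (V * (real_diag_mat n e * (mat_adjoint V * U)))"
      by (simp add: simps)
    also have "\<dots> = real_diag_mat n e * (mat_adjoint V * U)"
      by (rule unitary_cancel1[OF V, of _ n]) (simp add: simps)
    finally show ?thesis unfolding W_def .
  qed
  ultimately have WD: "W * real_diag_mat n d = real_diag_mat n e * W" using H by simp
  have WF: "W * real_diag_mat n (\<lambda>i. f (d i)) = real_diag_mat n (\<lambda>i. f (e i)) * W"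
  proof (rule eq_matI)
    fix i j assume "i < dim_row (real_diag_mat n (\<lambda>i. f (e i)) * W)" "j < dim_col (real_diag_mat n (\<lambda>i. f (e i)) * W)"
    then have i: "i < n" and j: "j < n" using Wc by simp_all
    have "W $$ (i,j) * complex_of_real (d j) = complex_of_real (e i) * W $$ (i,j)"
      using arg_cong[OF WD, of "\<lambda>M. M $$ (i,j)"] mult_rdiag_right[OF Wc i j] mult_rdiag_left[OF Wc i j] by simp
    then have "W $$ (i,j) = 0 \<or> d j = e i" by (simp add: mult.commute)
    then have "W $$ (i,j) * complex_of_real (f (d j)) = complex_of_real (f (e i)) * W $$ (i,j)" by auto
    then show "(W * real_diag_mat n (\<lambda>i. f (d i))) $$ (i,j) = (real_diag_mat n (\<lambda>i. f (e i)) * W) $$ (i,j)"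
      using mult_rdiag_right[OF Wc i j] mult_rdiag_left[OF Wc i j] by simp
  qed (use Wc in simp_all)
  have VW: "V * W = U" unfolding W_def by (rule unitary_cancel2[OF V Uc])
  have WU: "W * mat_adjoint U = mat_adjoint V"
  proof -
    have "W * mat_adjoint U = mat_adjoint V * (U * mat_adjoint U)" unfolding W_def by (simp add: simps)
    also have "\<dots> = mat_adjoint V" using U unfolding unitary_mat_def by (simp add: right_mult_one_mat[OF Va])
    finally show ?thesis .
  qed
  have "U * real_diag_mat n (\<lambda>i. f (d i)) * mat_adjoint U = V * ((W * real_diag_mat n (\<lambda>i. f (d i))) * mat_adjoint U)"
    unfolding VW[symmetric] by (simp add: simps Wc)
  also have "\<dots> = V * (real_diag_mat n (\<lambda>i. f (e i)) * (W * mat_adjoint U))"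
    unfolding WF by (simp add: simps Wc)
  also have "\<dots> = V * real_diag_mat n (\<lambda>i. f (e i)) * mat_adjoint V"
    unfolding WU by (simp add: simps)
  finally show ?thesis .
qed

lemma mat_rpow_eq: assumes U: "unitary_mat n U" and d: "\<forall>i<n. d i > 0" and A: "A = U * real_diag_mat n d * mat_adjoint U"
  shows "mat_rpow A r = U * real_diag_mat n (\<lambda>i. d i powr r) * mat_adjoint U"
proof -
  have Uc: "U \<in> carrier_mat n n" using U unitary_carrier by blast
  have dimA: "dim_row A = n" unfolding A using Uc by simp
  show ?thesis unfolding mat_rpow_def dimA
  proof (rule the_equality)
    show "\<exists>U' d'. unitary_mat n U' \<and> (\<forall>i<n. 0 < d' i) \<and> A = U' * real_diag_mat n d' * mat_adjoint U' \<and>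
        U * real_diag_mat n (\<lambda>i. d i powr r) * mat_adjoint U = U' * real_diag_mat n (\<lambda>i. d' i powr r) * mat_adjoint U'"
      using U d A by blast
  next
    fix B assume "\<exists>U' d'. unitary_mat n U' \<and> (\<forall>i<n. 0 < d' i) \<and> A = U' * real_diag_mat n d' * mat_adjoint U' \<and>
        B = U' * real_diag_mat n (\<lambda>i. d' i powr r) * mat_adjoint U'"
    then obtain U' d' where U': "unitary_mat n U'" and A': "A = U' * real_diag_mat n d' * mat_adjoint U'"
      and B: "B = U' * real_diag_mat n (\<lambda>i. d' i powr r) * mat_adjoint U'" by blast
    show "B = U * real_diag_mat n (\<lambda>i. d i powr r) * mat_adjoint U"
      unfolding B by (rule rpow_unique[OF U' U]) (use A A' in simp)
  qed
qed

lemma pos_sum_sq: fixes v :: "complex Matrix.vec" assumes v: "v \<in> carrier_vec n" and v0: "v \<noteq> 0\<^sub>v n"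
  shows "(\<Sum>l<n. (cmod (v $ l))^2) > 0"
proof -
  obtain l where l: "l < n" and vl: "v $ l \<noteq> 0"
  proof -
    have "\<not> (\<forall>l<n. v $ l = 0)"
    proof
      assume "\<forall>l<n. v $ l = 0"
      then have "v = 0\<^sub>v n" using v by (intro eq_vecI) simp_all
      then show False using v0 by simp
    qed
    then show ?thesis using that by blast
  qed
  have "(cmod (v $ l))^2 > 0" using vl by simp
  moreover have "(cmod (v $ l))^2 \<le> (\<Sum>l<n. (cmod (v $ l))^2)"
    by (rule member_le_sum) (use l in simp_all)
  ultimately show ?thesis by linarith
qed

lemma pd_of_decomp: assumes U: "unitary_mat n U" and d: "\<forall>i<n. d i > 0"
  shows "pd_mat n (U * real_diag_mat n d * mat_adjoint U)"
  unfolding pd_mat_def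
proof (intro conjI ballI impI)
  have Uc: "U \<in> carrier_mat n n" using U unitary_carrier by blast
  then show "U * real_diag_mat n d * mat_adjoint U \<in> carrier_mat n n" by (simp add: mult_carrier_sq)
  fix v :: "complex Matrix.vec" assume v: "v \<in> carrier_vec n" and v0: "v \<noteq> 0\<^sub>v n"
  define y where "y = mat_adjoint U *\<^sub>v v"
  have y: "y \<in> carrier_vec n" unfolding y_def using Uc by simp
  have "y \<noteq> 0\<^sub>v n"
  proof
    assume "y = 0\<^sub>v n"
    then have "(\<Sum>l<n. (cmod (y $ l))^2) = 0" by simp
    then show False using unitary_norm[OF U v] pos_sum_sq[OF v v0] unfolding y_def by simp
  qed
  then obtain l where l: "l < n" and yl: "y $ l \<noteq> 0" using y by (metis eq_vecI index_zero_vec(1) index_zero_vec(2) carrier_vecD)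
  have q: "quad_form (U * real_diag_mat n d * mat_adjoint U) v = complex_of_real (\<Sum>l<n. d l * (cmod (y $ l))^2)"
    unfolding y_def by (rule quad_diag[OF Uc v])
  have "d l * (cmod (y $ l))^2 > 0" using d l yl by simp
  moreover have "d l * (cmod (y $ l))^2 \<le> (\<Sum>l<n. d l * (cmod (y $ l))^2)"
    by (rule member_le_sum) (use l mult_nonneg_nonneg[OF less_imp_le[OF d[rule_format]] zero_le_power2] in simp_all)
  ultimately have "(\<Sum>l<n. d l * (cmod (y $ l))^2) > 0" by linarith
  then show "Re (quad_form (U * real_diag_mat n d * mat_adjoint U) v) > 0" unfolding q by simp
  show "Im (quad_form (U * real_diag_mat n d * mat_adjoint U) v) = 0" unfolding q by simp
qed

lemma pd_decomp: assumes "pd_mat n A"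
  shows "\<exists>U d. unitary_mat n U \<and> (\<forall>i<n. d i > 0) \<and> A = U * real_diag_mat n d * mat_adjoint U"
proof -
  obtain U d where U: "unitary_mat n U" and A: "A = U * real_diag_mat n d * mat_adjoint U"
    using spectral[OF pd_herm[OF assms]] by blast
  have Uc: "U \<in> carrier_mat n n" using U unitary_carrier by blast
  have "d i > 0" if i: "i < n" for i
  proof -
    define v where "v = U *\<^sub>v unit_vec n i"
    have v: "v \<in> carrier_vec n" unfolding v_def using Uc by simp
    have y: "mat_adjoint U *\<^sub>v v = unit_vec n i"
      unfolding v_def using U Uc unfolding unitary_mat_def by (simp add: assoc_mult_mat_vec[symmetric, of _ n n _ n])
    have v0: "v \<noteq> 0\<^sub>v n"
    proof
      assume "v = 0\<^sub>v n"
      then have "(mat_adjoint U *\<^sub>v v) $ i = 0" using Uc i by simp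
      then show False using y i by simp
    qed
    have "quad_form A v = complex_of_real (\<Sum>l<n. d l * (cmod ((unit_vec n i :: complex Matrix.vec) $ l))^2)"
      unfolding A by (subst quad_diag[OF Uc v]) (simp only: y)
    also have "(\<Sum>l<n. d l * (cmod ((unit_vec n i :: complex Matrix.vec) $ l))^2) = d i"
      by (rule trans[OF sum_one'[OF i]]) (use i in simp_all)
    finally have "quad_form A v = complex_of_real (d i)" .
    moreover have "Re (quad_form A v) > 0" using assms v v0 unfolding pd_mat_def by blast
    ultimately show ?thesis by simp
  qed
  then show ?thesis using U A by blast
qed

definition psi :: "real \<Rightarrow> real \<Rightarrow> real \<Rightarrow> real" where
  "psi a x t = indicator {0<..} t * (t powr (a-1) / (x + t))"

lemma psi_meas[measurable]: "(\<lambda>t. psi a x t) \<in> borel_measurable borel"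
  unfolding psi_def by measurable

lemma psi_nonneg: "x > 0 \<Longrightarrow> psi a x t \<ge> 0"
  unfolding psi_def by (auto simp: indicator_def)

lemma psi_scale: assumes x: "x > 0"
  shows "psi a x (x * s) = x powr (a - 2) * psi a 1 s"
proof (cases "s > 0")
  case True
  then have xs: "x * s > 0" using x by simp
  have "psi a x (x * s) = (x * s) powr (a-1) / (x + x * s)" unfolding psi_def using xs by simp
  also have "\<dots> = x powr (a-1) * s powr (a-1) / (x * (1 + s))"
    using x True by (simp add: powr_mult distrib_left)
  also have "\<dots> = (x powr (a-1) / x) * (s powr (a-1) / (1 + s))" by simp
  also have "x powr (a-1) / x = x powr (a - 2)"
    using x by (simp add: powr_diff power2_eq_square)
  finally show ?thesis unfolding psi_def using True by simp
next
  case False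
  then have "\<not> x * s > 0" using x by (simp add: zero_less_mult_iff)
  then show ?thesis using False unfolding psi_def by simp
qed

lemma intG: assumes x: "x > 0"
  shows "(\<integral>\<^sup>+t. ennreal (psi a x t) \<partial>lborel) = ennreal (x powr (a-1)) * (\<integral>\<^sup>+t. ennreal (psi a 1 t) \<partial>lborel)"
proof -
  have "(\<integral>\<^sup>+t. ennreal (psi a x t) \<partial>lborel) = \<bar>x\<bar> * (\<integral>\<^sup>+s. ennreal (psi a x (0 + x * s)) \<partial>lborel)"
    by (rule nn_integral_real_affine) (use x in simp_all)
  also have "(\<integral>\<^sup>+s. ennreal (psi a x (0 + x * s)) \<partial>lborel) = (\<integral>\<^sup>+s. ennreal (x powr (a-2)) * ennreal (psi a 1 s) \<partial>lborel)"
    using x by (intro nn_integral_cong) (simp add: psi_scale ennreal_mult psi_nonneg)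
  also have "\<dots> = ennreal (x powr (a-2)) * (\<integral>\<^sup>+s. ennreal (psi a 1 s) \<partial>lborel)"
    by (rule nn_integral_cmult) simp
  finally have "(\<integral>\<^sup>+t. ennreal (psi a x t) \<partial>lborel) = ennreal x * ennreal (x powr (a-2)) * (\<integral>\<^sup>+s. ennreal (psi a 1 s) \<partial>lborel)"
    using x by (simp add: mult.assoc)
  also have "ennreal x * ennreal (x powr (a-2)) = ennreal (x powr (a-1))"
  proof -
    have "x * x powr (a-2) = x powr (a-1)" using x by (simp add: powr_diff power2_eq_square field_simps)
    then show ?thesis using x by (simp add: ennreal_mult[symmetric])
  qed
  finally show ?thesis .
qed

lemma psi_bound: assumes a: "0 < a" "a < 1"
  shows "psi a 1 t \<le> indicator {0..1} t * t powr (a-1) + indicator {1..} t * t powr (a-2)"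
proof (cases "t > 0")
  case False then show ?thesis unfolding psi_def by (auto simp: indicator_def)
next
  case True
  show ?thesis
  proof (cases "t \<le> 1")
    case le: True
    have "t powr (a-1) / (1 + t) \<le> t powr (a-1)" using True by (simp add: divide_le_eq)
    moreover have "indicator {1..} t * t powr (a-2) \<ge> 0" by (simp add: indicator_def)
    ultimately show ?thesis unfolding psi_def using True le by (simp add: indicator_def)
  next
    case gt: False
    have "t powr (a-1) / (1 + t) \<le> t powr (a-1) / t"
      using True by (intro divide_left_mono) simp_all
    also have "\<dots> = t powr (a-2)" using True by (simp add: powr_diff power2_eq_square)
    finally show ?thesis unfolding psi_def using True gt by (simp add: indicator_def)
  qed
qed

lemma F1_fin: assumes a: "0 < a" "a < 1"
  shows "(\<integral>\<^sup>+t. ennreal (psi a 1 t) \<partial>lborel) < \<infinity>"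
proof -
  have i1: "(\<integral>\<^sup>+t. ennreal (indicator {0..1} t * t powr (a-1)) \<partial>lborel) = ennreal (1 powr (a - 1 + 1) / (a - 1 + 1))"
    by (rule nn_integral_has_integral_lebesgue) (use has_integral_powr_from_0[of "a-1" 1] a in simp_all)
  have i2: "(\<integral>\<^sup>+t. ennreal (indicator {1..} t * t powr (a-2)) \<partial>lborel) = ennreal (-(1 powr (a - 2 + 1)) / (a - 2 + 1))"
    by (rule nn_integral_has_integral_lebesgue) (use has_integral_powr_to_inf[of "a-2" 1] a in simp_all)
  have "(\<integral>\<^sup>+t. ennreal (psi a 1 t) \<partial>lborel) \<le> (\<integral>\<^sup>+t. ennreal (indicator {0..1} t * t powr (a-1)) + ennreal (indicator {1..} t * t powr (a-2)) \<partial>lborel)"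
  proof (rule nn_integral_mono)
    fix t :: real
    have "ennreal (psi a 1 t) \<le> ennreal (indicator {0..1} t * t powr (a-1) + indicator {1..} t * t powr (a-2))"
      using psi_bound[OF a] by (rule ennreal_leI)
    also have "\<dots> = ennreal (indicator {0..1} t * t powr (a-1)) + ennreal (indicator {1..} t * t powr (a-2))"
      by (rule ennreal_plus) simp_all
    finally show "ennreal (psi a 1 t) \<le> ennreal (indicator {0..1} t * t powr (a-1)) + ennreal (indicator {1..} t * t powr (a-2))" .
  qed
  also have "\<dots> = (\<integral>\<^sup>+t. ennreal (indicator {0..1} t * t powr (a-1)) \<partial>lborel) + (\<integral>\<^sup>+t. ennreal (indicator {1..} t * t powr (a-2)) \<partial>lborel)"
    by (rule nn_integral_add) measurable
  also have "\<dots> < \<infinity>" unfolding i1 i2 by simp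
  finally show ?thesis .
qed

lemma F1_pos: assumes a: "0 < a" "a < 1"
  shows "(\<integral>\<^sup>+t. ennreal (psi a 1 t) \<partial>lborel) > 0"
proof -
  have "ennreal (1/2) * emeasure lborel {0<..1::real} = (\<integral>\<^sup>+t. ennreal (1/2) * indicator {0<..1::real} t \<partial>lborel)"
    by (subst nn_integral_cmult_indicator) simp_all
  also have "\<dots> \<le> (\<integral>\<^sup>+t. ennreal (psi a 1 t) \<partial>lborel)"
  proof (rule nn_integral_mono)
    fix t :: real
    show "ennreal (1/2) * indicator {0<..1} t \<le> ennreal (psi a 1 t)"
    proof (cases "0 < t \<and> t \<le> 1")
      case True
      have "1 \<le> t powr (a-1)" using powr_mono2'[of "a-1" t 1] True a by simp
      moreover have "1/2 \<le> 1 / (1 + t)" using True by (simp add: divide_simps)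
      ultimately have "1/2 \<le> t powr (a-1) / (1 + t)"
        by (smt (verit) True divide_right_mono)
      then have "ennreal (1/2) \<le> ennreal (t powr (a-1) / (1 + t))" by (rule ennreal_leI)
      moreover have "psi a 1 t = t powr (a-1) / (1 + t)" using True unfolding psi_def by simp
      ultimately show ?thesis using True by (simp add: indicator_def)
    next
      case False
      then have "indicator {0<..1} t = (0::ennreal)" by (simp add: indicator_def)
      then show ?thesis by simp
    qed
  qed
  finally have "ennreal (1/2) \<le> (\<integral>\<^sup>+t. ennreal (psi a 1 t) \<partial>lborel)" by simp
  then show ?thesis by (metis ennreal_eq_0_iff not_gr_zero order_le_less_trans zero_less_divide_1_iff zero_less_numeral not_le)
qed

definition Kc :: "real \<Rightarrow> real" where
  "Kc a = enn2real (\<integral>\<^sup>+t. ennreal (psi a 1 t) \<partial>lborel)"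

lemma F1_eq: assumes "0 < a" "a < 1"
  shows "(\<integral>\<^sup>+t. ennreal (psi a 1 t) \<partial>lborel) = ennreal (Kc a)" and "Kc a > 0"
proof -
  have f: "(\<integral>\<^sup>+t. ennreal (psi a 1 t) \<partial>lborel) < \<infinity>" by (rule F1_fin[OF assms])
  have p: "(\<integral>\<^sup>+t. ennreal (psi a 1 t) \<partial>lborel) > 0" by (rule F1_pos[OF assms])
  show "(\<integral>\<^sup>+t. ennreal (psi a 1 t) \<partial>lborel) = ennreal (Kc a)"
    unfolding Kc_def using f by (simp add: ennreal_enn2real_if)
  then show "Kc a > 0" using p by simp
qed

definition Ssum :: "real \<Rightarrow> nat \<Rightarrow> (nat \<Rightarrow> real) \<Rightarrow> (nat \<Rightarrow> real) \<Rightarrow> real \<Rightarrow> real" where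
  "Ssum a k \<alpha> x t = (\<Sum>j<k. \<alpha> j * psi a (x j) t)"

definition Psum :: "real \<Rightarrow> nat \<Rightarrow> (nat \<Rightarrow> real) \<Rightarrow> (nat \<Rightarrow> real) \<Rightarrow> real" where
  "Psum a k \<alpha> x = (\<Sum>j<k. \<alpha> j * x j powr (a-1))"

lemma Ssum_meas[measurable]: "(\<lambda>t. Ssum a k \<alpha> x t) \<in> borel_measurable borel"
  unfolding Ssum_def by measurable

lemma Ssum_nonneg: "\<forall>j<k. \<alpha> j \<ge> 0 \<Longrightarrow> \<forall>j<k. x j > 0 \<Longrightarrow> Ssum a k \<alpha> x t \<ge> 0"
  unfolding Ssum_def by (intro sum_nonneg) (simp add: psi_nonneg)

lemma int_sum: assumes a: "0 < a" "a < 1" and al: "\<forall>j<k. \<alpha> j \<ge> 0" and x: "\<forall>j<k. x j > 0"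
  shows "(\<integral>\<^sup>+t. ennreal (Ssum a k \<alpha> x t) \<partial>lborel) = ennreal (Psum a k \<alpha> x * Kc a)"
proof -
  have "(\<integral>\<^sup>+t. ennreal (Ssum a k \<alpha> x t) \<partial>lborel) = (\<integral>\<^sup>+t. (\<Sum>j<k. ennreal (\<alpha> j) * ennreal (psi a (x j) t)) \<partial>lborel)"
    unfolding Ssum_def
  proof (intro nn_integral_cong)
    fix t :: real
    have nn: "0 \<le> \<alpha> j * psi a (x j) t" if "j \<in> {..<k}" for j
      using that al x psi_nonneg[of "x j" a t] by simp
    have "ennreal (\<Sum>j<k. \<alpha> j * psi a (x j) t) = (\<Sum>j<k. ennreal (\<alpha> j * psi a (x j) t))"
      by (rule sum_ennreal[symmetric]) (rule nn)
    also have "\<dots> = (\<Sum>j<k. ennreal (\<alpha> j) * ennreal (psi a (x j) t))"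
    proof (rule sum.cong[OF refl])
      fix j assume "j \<in> {..<k}"
      then show "ennreal (\<alpha> j * psi a (x j) t) = ennreal (\<alpha> j) * ennreal (psi a (x j) t)"
        using al x psi_nonneg[of "x j" a t] by (intro ennreal_mult) simp_all
    qed
    finally show "ennreal (\<Sum>j<k. \<alpha> j * psi a (x j) t) = (\<Sum>j<k. ennreal (\<alpha> j) * ennreal (psi a (x j) t))" .
  qed
  also have "\<dots> = (\<Sum>j<k. (\<integral>\<^sup>+t. ennreal (\<alpha> j) * ennreal (psi a (x j) t) \<partial>lborel))"
    by (rule nn_integral_sum) simp
  also have "\<dots> = (\<Sum>j<k. ennreal (\<alpha> j * x j powr (a-1) * Kc a))"
  proof (rule sum.cong)
    fix j assume "j \<in> {..<k}"
    then have j: "\<alpha> j \<ge> 0" "x j > 0" using al x by simp_all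
    have "(\<integral>\<^sup>+t. ennreal (\<alpha> j) * ennreal (psi a (x j) t) \<partial>lborel) = ennreal (\<alpha> j) * (\<integral>\<^sup>+t. ennreal (psi a (x j) t) \<partial>lborel)"
      by (rule nn_integral_cmult) simp
    also have "\<dots> = ennreal (\<alpha> j) * (ennreal (x j powr (a-1)) * ennreal (Kc a))"
      using intG[OF j(2)] F1_eq[OF a] by simp
    also have "\<dots> = ennreal (\<alpha> j * x j powr (a-1) * Kc a)"
      using j F1_eq(2)[OF a] by (simp add: ennreal_mult mult.assoc)
    finally show "(\<integral>\<^sup>+t. ennreal (\<alpha> j) * ennreal (psi a (x j) t) \<partial>lborel) = ennreal (\<alpha> j * x j powr (a-1) * Kc a)" .
  qed simp
  also have "\<dots> = ennreal (\<Sum>j<k. \<alpha> j * x j powr (a-1) * Kc a)"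
    by (rule sum_ennreal) (use al F1_eq(2)[OF a] in simp)
  also have "(\<Sum>j<k. \<alpha> j * x j powr (a-1) * Kc a) = Psum a k \<alpha> x * Kc a"
    unfolding Psum_def by (simp add: sum_distrib_right)
  finally show ?thesis .
qed

lemma int_ineq:
  assumes a: "0 < a" "a < 1"
    and c: "c1 \<ge> 0" "c2 \<ge> 0" "c3 \<ge> 0" "c4 \<ge> 0"
    and al: "\<forall>j<k. \<alpha>1 j \<ge> 0" "\<forall>j<k. \<alpha>2 j \<ge> 0" "\<forall>j<k. \<alpha>3 j \<ge> 0" "\<forall>j<k. \<alpha>4 j \<ge> 0"
    and x: "\<forall>j<k. x1 j > 0" "\<forall>j<k. x2 j > 0" "\<forall>j<k. x3 j > 0" "\<forall>j<k. x4 j > 0"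
    and H: "\<And>t. t > 0 \<Longrightarrow> c1 * Ssum a k \<alpha>1 x1 t + c2 * Ssum a k \<alpha>2 x2 t \<le> c3 * Ssum a k \<alpha>3 x3 t + c4 * Ssum a k \<alpha>4 x4 t"
  shows "c1 * Psum a k \<alpha>1 x1 + c2 * Psum a k \<alpha>2 x2 \<le> c3 * Psum a k \<alpha>3 x3 + c4 * Psum a k \<alpha>4 x4"
proof -
  have S0: "Ssum a k \<alpha> x t = 0" if "\<not> t > 0" for \<alpha> x t
    using that unfolding Ssum_def psi_def by simp
  have H': "c1 * Ssum a k \<alpha>1 x1 t + c2 * Ssum a k \<alpha>2 x2 t \<le> c3 * Ssum a k \<alpha>3 x3 t + c4 * Ssum a k \<alpha>4 x4 t" for t
    using H[of t] S0 by (cases "t > 0") simp_all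
  have split: "ennreal (d1 * Ssum a k \<beta>1 y1 t + d2 * Ssum a k \<beta>2 y2 t)
      = ennreal d1 * ennreal (Ssum a k \<beta>1 y1 t) + ennreal d2 * ennreal (Ssum a k \<beta>2 y2 t)"
    if "d1 \<ge> 0" "d2 \<ge> 0" "\<forall>j<k. \<beta>1 j \<ge> 0" "\<forall>j<k. \<beta>2 j \<ge> 0" "\<forall>j<k. y1 j > 0" "\<forall>j<k. y2 j > 0" for d1 d2 \<beta>1 \<beta>2 y1 y2 t
  proof -
    have n1: "Ssum a k \<beta>1 y1 t \<ge> 0" and n2: "Ssum a k \<beta>2 y2 t \<ge> 0"
      using that Ssum_nonneg by blast+
    have "ennreal (d1 * Ssum a k \<beta>1 y1 t + d2 * Ssum a k \<beta>2 y2 t) = ennreal (d1 * Ssum a k \<beta>1 y1 t) + ennreal (d2 * Ssum a k \<beta>2 y2 t)"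
      by (rule ennreal_plus) (use that n1 n2 in simp_all)
    also have "\<dots> = ennreal d1 * ennreal (Ssum a k \<beta>1 y1 t) + ennreal d2 * ennreal (Ssum a k \<beta>2 y2 t)"
      using that n1 n2 by (simp add: ennreal_mult)
    finally show ?thesis .
  qed
  have intsplit: "(\<integral>\<^sup>+t. ennreal (d1 * Ssum a k \<beta>1 y1 t + d2 * Ssum a k \<beta>2 y2 t) \<partial>lborel)
      = ennreal ((d1 * Psum a k \<beta>1 y1 + d2 * Psum a k \<beta>2 y2) * Kc a)"
    if d: "d1 \<ge> 0" "d2 \<ge> 0" and b: "\<forall>j<k. \<beta>1 j \<ge> 0" "\<forall>j<k. \<beta>2 j \<ge> 0" and y: "\<forall>j<k. y1 j > 0" "\<forall>j<k. y2 j > 0" for d1 d2 \<beta>1 \<beta>2 y1 y2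
  proof -
    have P: "Psum a k \<beta> y \<ge> 0" if "\<forall>j<k. \<beta> j \<ge> 0" for \<beta> y
      unfolding Psum_def using that by (intro sum_nonneg) simp
    have "(\<integral>\<^sup>+t. ennreal (d1 * Ssum a k \<beta>1 y1 t + d2 * Ssum a k \<beta>2 y2 t) \<partial>lborel)
        = (\<integral>\<^sup>+t. ennreal d1 * ennreal (Ssum a k \<beta>1 y1 t) + ennreal d2 * ennreal (Ssum a k \<beta>2 y2 t) \<partial>lborel)"
      using split[OF d b y] by simp
    also have "\<dots> = ennreal d1 * (\<integral>\<^sup>+t. ennreal (Ssum a k \<beta>1 y1 t) \<partial>lborel) + ennreal d2 * (\<integral>\<^sup>+t. ennreal (Ssum a k \<beta>2 y2 t) \<partial>lborel)"
      by (simp add: nn_integral_add nn_integral_cmult)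
    also have "\<dots> = ennreal d1 * ennreal (Psum a k \<beta>1 y1 * Kc a) + ennreal d2 * ennreal (Psum a k \<beta>2 y2 * Kc a)"
      using int_sum[OF a b(1) y(1)] int_sum[OF a b(2) y(2)] by simp
    also have "\<dots> = ennreal ((d1 * Psum a k \<beta>1 y1 + d2 * Psum a k \<beta>2 y2) * Kc a)"
      using d P[OF b(1)] P[OF b(2)] F1_eq(2)[OF a]
      by (simp add: ennreal_mult[symmetric] ennreal_plus[symmetric] distrib_right mult.assoc del: ennreal_plus)
    finally show ?thesis .
  qed
  have "ennreal ((c1 * Psum a k \<alpha>1 x1 + c2 * Psum a k \<alpha>2 x2) * Kc a) \<le> ennreal ((c3 * Psum a k \<alpha>3 x3 + c4 * Psum a k \<alpha>4 x4) * Kc a)"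
    unfolding intsplit[OF c(1,2) al(1,2) x(1,2), symmetric] intsplit[OF c(3,4) al(3,4) x(3,4), symmetric]
    by (intro nn_integral_mono ennreal_leI H')
  moreover have "(c3 * Psum a k \<alpha>3 x3 + c4 * Psum a k \<alpha>4 x4) * Kc a \<ge> 0"
    using c al x F1_eq(2)[OF a] unfolding Psum_def by (intro mult_nonneg_nonneg add_nonneg_nonneg sum_nonneg) simp_all
  ultimately have "(c1 * Psum a k \<alpha>1 x1 + c2 * Psum a k \<alpha>2 x2) * Kc a \<le> (c3 * Psum a k \<alpha>3 x3 + c4 * Psum a k \<alpha>4 x4) * Kc a"
    by simp
  then show ?thesis using F1_eq(2)[OF a] by simp
qed

definition Tm :: "real \<Rightarrow> complex \<Rightarrow> complex \<Rightarrow> real" where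
  "Tm m z y = 2 * Re (cnj z * y) - m * (cmod z)^2"

lemma Tm_bound: assumes m: "m > 0" shows "Tm m z y \<le> (cmod y)^2 / m"
proof -
  have "0 \<le> (m * Re z - Re y)^2 + (m * Im z - Im y)^2" by simp
  then have "m * (2 * (Re z * Re y + Im z * Im y) - m * ((Re z)^2 + (Im z)^2)) \<le> (Re y)^2 + (Im y)^2"
    by (simp add: power2_eq_square algebra_simps)
  then have "m * Tm m z y \<le> (cmod y)^2"
    unfolding Tm_def cmod_power2 by simp
  then show ?thesis using m by (simp add: field_simps mult.commute)
qed

lemma Tm_eq: assumes m: "m > 0" shows "Tm m (y / complex_of_real m) y = (cmod y)^2 / m"
proof -
  have "cnj (y / complex_of_real m) * y = (cnj y * y) / complex_of_real m" by simp
  also have "cnj y * y = complex_of_real ((cmod y)^2)" by (rule cnj_mult_self)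
  finally have A: "cnj (y / complex_of_real m) * y = complex_of_real ((cmod y)^2 / m)" by simp
  have B: "cmod (y / complex_of_real m) = cmod y / m" using m by (simp add: norm_divide)
  show ?thesis unfolding Tm_def A B Re_complex_of_real using m by (simp add: power2_eq_square field_simps)
qed

lemma quad_lin: assumes A: "(A::complex mat) \<in> carrier_mat n n" and B: "B \<in> carrier_mat n n" and v: "v \<in> carrier_vec n"
  shows "quad_form (c1 \<cdot>\<^sub>m A + c2 \<cdot>\<^sub>m B) v = c1 * quad_form A v + c2 * quad_form B v"
proof -
  have C: "c1 \<cdot>\<^sub>m A + c2 \<cdot>\<^sub>m B \<in> carrier_mat n n" using A B by simp
  have "quad_form (c1 \<cdot>\<^sub>m A + c2 \<cdot>\<^sub>m B) v = (\<Sum>i<n. \<Sum>j<n. cnj (v$i) * (c1 * A$$(i,j) + c2 * B$$(i,j)) * v$j)"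
    using A B by (simp add: quad_form_sum[OF C v])
  also have "\<dots> = c1 * (\<Sum>i<n. \<Sum>j<n. cnj (v$i) * A$$(i,j) * v$j) + c2 * (\<Sum>i<n. \<Sum>j<n. cnj (v$i) * B$$(i,j) * v$j)"
    by (simp add: sum_distrib_left sum.distrib algebra_simps)
  finally show ?thesis using quad_form_sum[OF A v] quad_form_sum[OF B v] by simp
qed

lemma phi_expand:
  assumes U: "unitary_mat n U" and u: "u \<in> carrier_vec n" and v: "v \<in> carrier_vec n"
  shows "2 * Re (conjugate v \<bullet> u) - Re (quad_form (U * real_diag_mat n x * mat_adjoint U) v) - \<tau> * Re (conjugate v \<bullet> v)
    = (\<Sum>j<n. Tm (x j + \<tau>) ((mat_adjoint U *\<^sub>v v) $ j) ((mat_adjoint U *\<^sub>v u) $ j))"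
proof -
  have Uc: "U \<in> carrier_mat n n" using U unitary_carrier by blast
  define y where "y = mat_adjoint U *\<^sub>v u"
  define z where "z = mat_adjoint U *\<^sub>v v"
  have y: "y \<in> carrier_vec n" and z: "z \<in> carrier_vec n" unfolding y_def z_def using Uc by simp_all
  have 1: "conjugate v \<bullet> u = (\<Sum>j<n. cnj (z$j) * y$j)"
    unfolding unitary_pres[OF U u v, symmetric] y_def[symmetric] z_def[symmetric]
    using y z by (simp add: scalar_prod_def atLeast0LessThan)
  have 2: "quad_form (U * real_diag_mat n x * mat_adjoint U) v = complex_of_real (\<Sum>j<n. x j * (cmod (z $ j))^2)"
    unfolding z_def by (rule quad_diag[OF Uc v])
  have 3: "conjugate v \<bullet> v = complex_of_real (\<Sum>j<n. (cmod (z $ j))^2)"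
    unfolding unitary_pres[OF U v v, symmetric] z_def[symmetric] by (rule sprod_self[OF z])
  show ?thesis unfolding 1 2 3 y_def[symmetric] z_def[symmetric] Tm_def
    by (simp add: Re_sum sum_subtractf sum_distrib_left sum.distrib algebra_simps)
qed

definition wt :: "complex mat \<Rightarrow> complex Matrix.vec \<Rightarrow> nat \<Rightarrow> real" where
  "wt U u j = (cmod ((mat_adjoint U *\<^sub>v u) $ j))^2"

lemma wt_nonneg: "wt U u j \<ge> 0" unfolding wt_def by simp

lemma wt_sum: "unitary_mat n U \<Longrightarrow> u \<in> carrier_vec n \<Longrightarrow> (\<Sum>j<n. wt U u j) = (\<Sum>l<n. (cmod (u $ l))^2)"
  unfolding wt_def by (rule unitary_norm)

lemma phi_bound:
  assumes U: "unitary_mat n U" and u: "u \<in> carrier_vec n" and v: "v \<in> carrier_vec n"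
    and pos: "\<forall>j<n. x j + \<tau> > 0"
  shows "2 * Re (conjugate v \<bullet> u) - Re (quad_form (U * real_diag_mat n x * mat_adjoint U) v) - \<tau> * Re (conjugate v \<bullet> v)
    \<le> (\<Sum>j<n. wt U u j / (x j + \<tau>))"
  unfolding phi_expand[OF U u v] wt_def
  by (rule sum_mono) (use pos Tm_bound in simp)

lemma phi_eq:
  assumes U: "unitary_mat n U" and u: "u \<in> carrier_vec n"
    and pos: "\<forall>j<n. x j + \<tau> > 0"
  defines "v \<equiv> U *\<^sub>v Matrix.vec n (\<lambda>j. (mat_adjoint U *\<^sub>v u) $ j / complex_of_real (x j + \<tau>))"
  shows "v \<in> carrier_vec n"
    and "2 * Re (conjugate v \<bullet> u) - Re (quad_form (U * real_diag_mat n x * mat_adjoint U) v) - \<tau> * Re (conjugate v \<bullet> v)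
    = (\<Sum>j<n. wt U u j / (x j + \<tau>))"
proof -
  have Uc: "U \<in> carrier_mat n n" using U unitary_carrier by blast
  show v: "v \<in> carrier_vec n" unfolding v_def using Uc by simp
  have z: "mat_adjoint U *\<^sub>v v = Matrix.vec n (\<lambda>j. (mat_adjoint U *\<^sub>v u) $ j / complex_of_real (x j + \<tau>))"
    unfolding v_def using U Uc unfolding unitary_mat_def by (simp add: assoc_mult_mat_vec[symmetric, of _ n n _ n])
  show "2 * Re (conjugate v \<bullet> u) - Re (quad_form (U * real_diag_mat n x * mat_adjoint U) v) - \<tau> * Re (conjugate v \<bullet> v)
    = (\<Sum>j<n. wt U u j / (x j + \<tau>))"
    unfolding phi_expand[OF U u v] wt_def z
  proof (rule sum.cong[OF refl])
    fix j assume "j \<in> {..<n}"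
    then have j: "j < n" by simp
    have e: "Matrix.vec n (\<lambda>j. (mat_adjoint U *\<^sub>v u) $ j / complex_of_real (x j + \<tau>)) $ j
      = (mat_adjoint U *\<^sub>v u) $ j / complex_of_real (x j + \<tau>)" using j by (simp del: of_real_add)
    show "Tm (x j + \<tau>) (Matrix.vec n (\<lambda>j. (mat_adjoint U *\<^sub>v u) $ j / complex_of_real (x j + \<tau>)) $ j) ((mat_adjoint U *\<^sub>v u) $ j)
      = (cmod ((mat_adjoint U *\<^sub>v u) $ j))^2 / (x j + \<tau>)"
      unfolding e by (rule Tm_eq) (use pos j in simp)
  qed
qed

lemma inv_convex:
  assumes UA: "unitary_mat k UA" and a: "\<forall>j<k. a j > 0" and A: "A = UA * real_diag_mat k a * mat_adjoint UA"
    and UB: "unitary_mat k UB" and b: "\<forall>j<k. b j > 0" and B: "B = UB * real_diag_mat k b * mat_adjoint UB"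
    and UC: "unitary_mat k UC" and c: "\<forall>j<k. c j > 0" and C: "C = UC * real_diag_mat k c * mat_adjoint UC"
    and CAB: "C = complex_of_real (1 - s) \<cdot>\<^sub>m A + complex_of_real s \<cdot>\<^sub>m B"
    and s: "0 \<le> s" "s \<le> 1" and \<tau>: "\<tau> \<ge> 0" and u: "u \<in> carrier_vec k"
  shows "(\<Sum>j<k. wt UC u j / (c j + \<tau>)) \<le> (1 - s) * (\<Sum>j<k. wt UA u j / (a j + \<tau>)) + s * (\<Sum>j<k. wt UB u j / (b j + \<tau>))"
proof -
  have Ac: "A \<in> carrier_mat k k" unfolding A using UA unitary_carrier by (simp add: mult_carrier_sq)
  have Bc: "B \<in> carrier_mat k k" unfolding B using UB unitary_carrier by (simp add: mult_carrier_sq)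
  define v where "v = UC *\<^sub>v Matrix.vec k (\<lambda>j. (mat_adjoint UC *\<^sub>v u) $ j / complex_of_real (c j + \<tau>))"
  have pc: "\<forall>j<k. c j + \<tau> > 0" using c \<tau> by (simp add: add_pos_nonneg)
  have pa: "\<forall>j<k. a j + \<tau> > 0" using a \<tau> by (simp add: add_pos_nonneg)
  have pb: "\<forall>j<k. b j + \<tau> > 0" using b \<tau> by (simp add: add_pos_nonneg)
  have v: "v \<in> carrier_vec k" using phi_eq(1)[OF UC u pc] unfolding v_def .
  have eqC: "2 * Re (conjugate v \<bullet> u) - Re (quad_form C v) - \<tau> * Re (conjugate v \<bullet> v) = (\<Sum>j<k. wt UC u j / (c j + \<tau>))"
    using phi_eq(2)[OF UC u pc] unfolding v_def C .
  have qC: "Re (quad_form C v) = (1 - s) * Re (quad_form A v) + s * Re (quad_form B v)"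
    unfolding CAB quad_lin[OF Ac Bc v] by simp
  have bA: "2 * Re (conjugate v \<bullet> u) - Re (quad_form A v) - \<tau> * Re (conjugate v \<bullet> v) \<le> (\<Sum>j<k. wt UA u j / (a j + \<tau>))"
    unfolding A by (rule phi_bound[OF UA u v pa])
  have bB: "2 * Re (conjugate v \<bullet> u) - Re (quad_form B v) - \<tau> * Re (conjugate v \<bullet> v) \<le> (\<Sum>j<k. wt UB u j / (b j + \<tau>))"
    unfolding B by (rule phi_bound[OF UB u v pb])
  have "(\<Sum>j<k. wt UC u j / (c j + \<tau>)) = (1 - s) * (2 * Re (conjugate v \<bullet> u) - Re (quad_form A v) - \<tau> * Re (conjugate v \<bullet> v))
      + s * (2 * Re (conjugate v \<bullet> u) - Re (quad_form B v) - \<tau> * Re (conjugate v \<bullet> v))"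
    unfolding eqC[symmetric] qC by (simp add: algebra_simps)
  also have "\<dots> \<le> (1 - s) * (\<Sum>j<k. wt UA u j / (a j + \<tau>)) + s * (\<Sum>j<k. wt UB u j / (b j + \<tau>))"
    using s bA bB by (intro add_mono mult_left_mono) simp_all
  finally show ?thesis .
qed

lemma Ssum_a: assumes t: "t > 0" and x: "\<forall>j<k. x j > 0"
  shows "Ssum a k (\<lambda>j. w j * x j) x t = t powr (a-1) * ((\<Sum>j<k. w j) - t * (\<Sum>j<k. w j / (x j + t)))"
proof -
  have "Ssum a k (\<lambda>j. w j * x j) x t = (\<Sum>j<k. t powr (a-1) * (w j - t * (w j / (x j + t))))"
    unfolding Ssum_def psi_def
  proof (rule sum.cong[OF refl])
    fix j assume "j \<in> {..<k}"
    then have xj: "x j > 0" using x by simp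
    then have "x j + t \<noteq> 0" using t by simp
    then show "w j * x j * (indicator {0<..} t * (t powr (a - 1) / (x j + t))) = t powr (a-1) * (w j - t * (w j / (x j + t)))"
      using t by (simp add: field_simps)
  qed
  also have "\<dots> = t powr (a-1) * ((\<Sum>j<k. w j) - t * (\<Sum>j<k. w j / (x j + t)))"
    by (simp only: sum_distrib_left sum_subtractf[symmetric])
  finally show ?thesis .
qed

lemma Ssum_b: assumes t: "t > 0"
  shows "Ssum a k w x t = t powr (a-1) * (\<Sum>j<k. w j / (x j + t))"
  unfolding Ssum_def psi_def sum_distrib_left using t by (intro sum.cong refl) (simp add: algebra_simps)

lemma Psum_a: assumes x: "\<forall>j<k. x j > 0"
  shows "Psum p k (\<lambda>j. w j * x j) x = (\<Sum>j<k. w j * x j powr p)"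
  unfolding Psum_def
proof (rule sum.cong[OF refl])
  fix j assume "j \<in> {..<k}"
  then have xj: "x j > 0" using x by simp
  have "x j * x j powr (p - 1) = x j powr p" using xj by (simp add: powr_diff field_simps)
  then show "w j * x j * x j powr (p - 1) = w j * x j powr p" by (simp add: mult.assoc)
qed

lemma Psum_b: "Psum (1 + p) k w x = (\<Sum>j<k. w j * x j powr p)"
  unfolding Psum_def by simp

locale three_decomp =
  fixes k :: nat and UA UB UC :: "complex mat" and a b c :: "nat \<Rightarrow> real" and A B C :: "complex mat" and s :: real
  assumes UA: "unitary_mat k UA" and a: "\<forall>j<k. a j > 0" and A: "A = UA * real_diag_mat k a * mat_adjoint UA"
    and UB: "unitary_mat k UB" and b: "\<forall>j<k. b j > 0" and B: "B = UB * real_diag_mat k b * mat_adjoint UB"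
    and UC: "unitary_mat k UC" and c: "\<forall>j<k. c j > 0" and C: "C = UC * real_diag_mat k c * mat_adjoint UC"
    and CAB: "C = complex_of_real (1 - s) \<cdot>\<^sub>m A + complex_of_real s \<cdot>\<^sub>m B"
    and s: "0 \<le> s" "s \<le> 1"
begin

lemma inv_conv: "\<tau> \<ge> 0 \<Longrightarrow> u \<in> carrier_vec k \<Longrightarrow>
  (\<Sum>j<k. wt UC u j / (c j + \<tau>)) \<le> (1 - s) * (\<Sum>j<k. wt UA u j / (a j + \<tau>)) + s * (\<Sum>j<k. wt UB u j / (b j + \<tau>))"
  by (rule inv_convex[OF UA a A UB b B UC c C CAB s])

lemma pow_neg: assumes p: "-1 < p" "p < 0" and u: "u \<in> carrier_vec k"
  shows "(\<Sum>j<k. wt UC u j * c j powr p) \<le> (1 - s) * (\<Sum>j<k. wt UA u j * a j powr p) + s * (\<Sum>j<k. wt UB u j * b j powr p)"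
proof -
  have ap: "0 < 1 + p" "1 + p < 1" using p by simp_all
  have wn: "\<forall>j<k. wt U u j \<ge> 0" for U using wt_nonneg by blast
  have "1 * Psum (1 + p) k (wt UC u) c + 0 * Psum (1 + p) k (wt UC u) c
      \<le> (1 - s) * Psum (1 + p) k (wt UA u) a + s * Psum (1 + p) k (wt UB u) b"
  proof (rule int_ineq[OF ap])
    fix t :: real assume t: "t > 0"
    have "t powr (1 + p - 1) * (\<Sum>j<k. wt UC u j / (c j + t))
       \<le> t powr (1 + p - 1) * ((1 - s) * (\<Sum>j<k. wt UA u j / (a j + t)) + s * (\<Sum>j<k. wt UB u j / (b j + t)))"
      using inv_conv[of t u] t u by (intro mult_left_mono) simp_all
    then show "1 * Ssum (1 + p) k (wt UC u) c t + 0 * Ssum (1 + p) k (wt UC u) c t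
      \<le> (1 - s) * Ssum (1 + p) k (wt UA u) a t + s * Ssum (1 + p) k (wt UB u) b t"
      unfolding Ssum_b[OF t] by (simp add: algebra_simps)
  qed (use s wn a b c in simp_all)
  then show ?thesis unfolding Psum_b by simp
qed

lemma pow_pos: assumes p: "0 < p" "p < 1" and u: "u \<in> carrier_vec k"
  shows "(1 - s) * (\<Sum>j<k. wt UA u j * a j powr p) + s * (\<Sum>j<k. wt UB u j * b j powr p) \<le> (\<Sum>j<k. wt UC u j * c j powr p)"
proof -
  have wn: "\<forall>j<k. wt U u j \<ge> 0" for U using wt_nonneg by blast
  have wn2: "\<forall>j<k. wt U u j * x j \<ge> 0" if "\<forall>j<k. x j > 0" for U x
    using that wt_nonneg by (simp add: less_imp_le)
  define W where "W = (\<Sum>l<k. (cmod (u $ l))^2)"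
  have WA: "(\<Sum>j<k. wt UA u j) = W" unfolding W_def by (rule wt_sum[OF UA u])
  have WB: "(\<Sum>j<k. wt UB u j) = W" unfolding W_def by (rule wt_sum[OF UB u])
  have WC: "(\<Sum>j<k. wt UC u j) = W" unfolding W_def by (rule wt_sum[OF UC u])
  have "(1 - s) * Psum p k (\<lambda>j. wt UA u j * a j) a + s * Psum p k (\<lambda>j. wt UB u j * b j) b
      \<le> 1 * Psum p k (\<lambda>j. wt UC u j * c j) c + 0 * Psum p k (\<lambda>j. wt UC u j * c j) c"
  proof (rule int_ineq[OF p])
    fix t :: real assume t: "t > 0"
    have "t * (\<Sum>j<k. wt UC u j / (c j + t))
       \<le> t * ((1 - s) * (\<Sum>j<k. wt UA u j / (a j + t)) + s * (\<Sum>j<k. wt UB u j / (b j + t)))"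
      using inv_conv[of t u] t u by (intro mult_left_mono) simp_all
    then have "(1 - s) * (W - t * (\<Sum>j<k. wt UA u j / (a j + t))) + s * (W - t * (\<Sum>j<k. wt UB u j / (b j + t)))
       \<le> W - t * (\<Sum>j<k. wt UC u j / (c j + t))"
      by (simp add: algebra_simps)
    then have "t powr (p - 1) * ((1 - s) * (W - t * (\<Sum>j<k. wt UA u j / (a j + t))) + s * (W - t * (\<Sum>j<k. wt UB u j / (b j + t))))
       \<le> t powr (p - 1) * (W - t * (\<Sum>j<k. wt UC u j / (c j + t)))"
      by (intro mult_left_mono) simp_all
    then show "(1 - s) * Ssum p k (\<lambda>j. wt UA u j * a j) a t + s * Ssum p k (\<lambda>j. wt UB u j * b j) b t
      \<le> 1 * Ssum p k (\<lambda>j. wt UC u j * c j) c t + 0 * Ssum p k (\<lambda>j. wt UC u j * c j) c t"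
      unfolding Ssum_a[OF t a] Ssum_a[OF t b] Ssum_a[OF t c] WA WB WC by (simp add: algebra_simps)
  qed (use s wn2 a b c in simp_all)
  then show ?thesis unfolding Psum_a[OF a] Psum_a[OF b] Psum_a[OF c] by simp
qed

end

lemma rpow_quad: assumes U: "unitary_mat n U" and x: "\<forall>j<n. x j > 0" and X: "X = U * real_diag_mat n x * mat_adjoint U"
  and u: "u \<in> carrier_vec n"
  shows "quad_form (mat_rpow X r) u = complex_of_real (\<Sum>j<n. wt U u j * x j powr r)"
proof -
  have Uc: "U \<in> carrier_mat n n" using U unitary_carrier by blast
  show ?thesis unfolding mat_rpow_eq[OF U x X] quad_diag[OF Uc u] wt_def
    by (simp add: mult.commute)
qed

lemma rpow_decomp: assumes U: "unitary_mat n U" and x: "\<forall>j<n. x j > 0" and X: "X = U * real_diag_mat n x * mat_adjoint U"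
  shows "mat_rpow X r = U * real_diag_mat n (\<lambda>j. x j powr r) * mat_adjoint U"
    and "\<forall>j<n. x j powr r > 0"
    and "mat_rpow X r \<in> carrier_mat n n"
proof -
  have Uc: "U \<in> carrier_mat n n" using U unitary_carrier by blast
  show "mat_rpow X r = U * real_diag_mat n (\<lambda>j. x j powr r) * mat_adjoint U" by (rule mat_rpow_eq[OF U x X])
  then show "mat_rpow X r \<in> carrier_mat n n" using Uc by (simp add: mult_carrier_sq)
  show "\<forall>j<n. x j powr r > 0"
  proof (intro allI impI)
    fix j assume "j < n" then have "x j > 0" using x by simp
    then show "x j powr r > 0" by simp
  qed
qed

lemma mv_unit: assumes A: "(A::complex mat) \<in> carrier_mat n n" and i: "i < n" and j: "j < n"
  shows "(A *\<^sub>v unit_vec n i) $ j = A $$ (j,i)"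
proof -
  have "(A *\<^sub>v unit_vec n i) $ j = (\<Sum>l<n. A $$ (j,l) * unit_vec n i $ l)"
    using A j by (simp add: scalar_prod_def atLeast0LessThan)
  also have "\<dots> = A $$ (j,i) * unit_vec n i $ i"
    by (rule sum_one'[OF i]) (use i in simp)
  finally show ?thesis using i by simp
qed

lemma trace_decomp: assumes U: "unitary_mat n U"
  shows "trace_mat (U * real_diag_mat n d * mat_adjoint U) = complex_of_real (\<Sum>l<n. d l)"
proof -
  have Uc: "U \<in> carrier_mat n n" using U unitary_carrier by blast
  have UD: "U * real_diag_mat n d \<in> carrier_mat n n" using Uc by (simp add: mult_carrier_sq)
  have col: "(\<Sum>i<n. (cmod (U $$ (i,l)))^2) = 1" if l: "l < n" for l
  proof -
    have "(mat_adjoint U * U) $$ (l,l) = (\<Sum>i<n. mat_adjoint U $$ (l,i) * U $$ (i,l))"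
      by (rule mult_entry[OF adj_carrier[OF Uc] Uc l l])
    also have "\<dots> = (\<Sum>i<n. complex_of_real ((cmod (U $$ (i,l)))^2))"
      using Uc l by (intro sum.cong refl) (simp add: cnj_mult_self)
    finally have "complex_of_real (\<Sum>i<n. (cmod (U $$ (i,l)))^2) = 1"
      using U l unfolding unitary_mat_def by simp
    then show ?thesis by (metis of_real_eq_1_iff)
  qed
  have "trace_mat (U * real_diag_mat n d * mat_adjoint U) = (\<Sum>i<n. (U * real_diag_mat n d * mat_adjoint U) $$ (i,i))"
  proof -
    have "dim_row (U * real_diag_mat n d * mat_adjoint U) = n" using Uc by simp
    then show ?thesis by (simp only: trace_mat_def)
  qed
  also have "\<dots> = (\<Sum>i<n. \<Sum>l<n. complex_of_real (d l * (cmod (U $$ (i,l)))^2))"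
  proof (rule sum.cong[OF refl])
    fix i assume "i \<in> {..<n}" then have i: "i < n" by simp
    have "(U * real_diag_mat n d * mat_adjoint U) $$ (i,i) = (\<Sum>l<n. (U * real_diag_mat n d) $$ (i,l) * mat_adjoint U $$ (l,i))"
      by (rule mult_entry[OF UD adj_carrier[OF Uc] i i])
    also have "\<dots> = (\<Sum>l<n. complex_of_real (d l * (cmod (U $$ (i,l)))^2))"
    proof (rule sum.cong[OF refl])
      fix l assume "l \<in> {..<n}" then have l: "l < n" by simp
      have "(U * real_diag_mat n d) $$ (i,l) * mat_adjoint U $$ (l,i) = complex_of_real (d l) * (cnj (U $$ (i,l)) * U $$ (i,l))"
        using mult_rdiag_right[OF Uc i l] Uc i l by simp
      also have "\<dots> = complex_of_real (d l * (cmod (U $$ (i,l)))^2)" by (simp only: cnj_mult_self of_real_mult)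
      finally show "(U * real_diag_mat n d) $$ (i,l) * mat_adjoint U $$ (l,i) = complex_of_real (d l * (cmod (U $$ (i,l)))^2)" .
    qed
    finally show "(U * real_diag_mat n d * mat_adjoint U) $$ (i,i) = (\<Sum>l<n. complex_of_real (d l * (cmod (U $$ (i,l)))^2))" .
  qed
  also have "\<dots> = complex_of_real (\<Sum>l<n. d l * (\<Sum>i<n. (cmod (U $$ (i,l)))^2))"
    by (simp only: of_real_sum[symmetric] sum_distrib_left) (rule arg_cong[of _ _ complex_of_real], rule sum.swap)
  also have "\<dots> = complex_of_real (\<Sum>l<n. d l)" using col by simp
  finally show ?thesis .
qed

lemma quad_one: assumes v: "(v::complex Matrix.vec) \<in> carrier_vec n"
  shows "quad_form (1\<^sub>m n) v = complex_of_real (\<Sum>l<n. (cmod (v $ l))^2)"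
  unfolding quad_form_def using v by (simp add: sprod_self[OF v])

lemma quad_lin3: assumes X: "(X::complex mat) \<in> carrier_mat n n" and Y: "Y \<in> carrier_mat n n" and Z: "Z \<in> carrier_mat n n"
  and v: "v \<in> carrier_vec n"
  shows "quad_form (c0 \<cdot>\<^sub>m X + (c1 \<cdot>\<^sub>m Y + c2 \<cdot>\<^sub>m Z)) v = c0 * quad_form X v + c1 * quad_form Y v + c2 * quad_form Z v"
proof -
  have YZ: "c1 \<cdot>\<^sub>m Y + c2 \<cdot>\<^sub>m Z \<in> carrier_mat n n" using Y Z by simp
  have "quad_form (c0 \<cdot>\<^sub>m X + 1 \<cdot>\<^sub>m (c1 \<cdot>\<^sub>m Y + c2 \<cdot>\<^sub>m Z)) v = c0 * quad_form X v + 1 * quad_form (c1 \<cdot>\<^sub>m Y + c2 \<cdot>\<^sub>m Z) v"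
    by (rule quad_lin[OF X YZ v])
  moreover have "1 \<cdot>\<^sub>m (c1 \<cdot>\<^sub>m Y + c2 \<cdot>\<^sub>m Z) = c1 \<cdot>\<^sub>m Y + c2 \<cdot>\<^sub>m Z"
    using YZ by (intro eq_matI) simp_all
  ultimately show ?thesis using quad_lin[OF Y Z v] by (simp add: algebra_simps)
qed

lemma phi_lin3: assumes L: "linear_mat_map k n \<Phi>" and X: "X \<in> carrier_mat k k" and Y: "Y \<in> carrier_mat k k" and Z: "Z \<in> carrier_mat k k"
  shows "\<Phi> (c0 \<cdot>\<^sub>m X + (c1 \<cdot>\<^sub>m Y + c2 \<cdot>\<^sub>m Z)) = c0 \<cdot>\<^sub>m \<Phi> X + (c1 \<cdot>\<^sub>m \<Phi> Y + c2 \<cdot>\<^sub>m \<Phi> Z)"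
proof -
  have add: "\<And>A B. A \<in> carrier_mat k k \<Longrightarrow> B \<in> carrier_mat k k \<Longrightarrow> \<Phi> (A + B) = \<Phi> A + \<Phi> B"
    and sm: "\<And>c A. A \<in> carrier_mat k k \<Longrightarrow> \<Phi> (c \<cdot>\<^sub>m A) = c \<cdot>\<^sub>m \<Phi> A"
    using L unfolding linear_mat_map_def by blast+
  have "\<Phi> (c0 \<cdot>\<^sub>m X + (c1 \<cdot>\<^sub>m Y + c2 \<cdot>\<^sub>m Z)) = \<Phi> (c0 \<cdot>\<^sub>m X) + \<Phi> (c1 \<cdot>\<^sub>m Y + c2 \<cdot>\<^sub>m Z)"
    using X Y Z by (intro add) simp_all
  also have "\<Phi> (c1 \<cdot>\<^sub>m Y + c2 \<cdot>\<^sub>m Z) = \<Phi> (c1 \<cdot>\<^sub>m Y) + \<Phi> (c2 \<cdot>\<^sub>m Z)"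
    using Y Z by (intro add) simp_all
  finally show ?thesis using X Y Z sm by simp
qed

lemma pd_image: assumes L: "linear_mat_map k n \<Phi>" and P: "positive_mat_map k n \<Phi>" and Un: "unital_mat_map k n \<Phi>"
  and U: "unitary_mat k U" and d: "\<forall>j<k. d j > 0"
  shows "pd_mat n (\<Phi> (U * real_diag_mat k d * mat_adjoint U))"
proof -
  define X where "X = U * real_diag_mat k d * mat_adjoint U"
  have Uc: "U \<in> carrier_mat k k" using U unitary_carrier by blast
  have Xc: "X \<in> carrier_mat k k" unfolding X_def using Uc by (simp add: mult_carrier_sq)
  have PXc: "\<Phi> X \<in> carrier_mat n n" using L Xc unfolding linear_mat_map_def by blast
  define \<mu> where "\<mu> = Min (insert 1 (d ` {..<k}))"
  have \<mu>pos: "\<mu> > 0" unfolding \<mu>_def using d by (subst Min_gr_iff) auto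
  have \<mu>le: "\<mu> \<le> d j" if "j < k" for j unfolding \<mu>_def using that by (intro Min_le) auto
  have psdD: "psd_mat k (1 \<cdot>\<^sub>m X + (complex_of_real (-\<mu>) \<cdot>\<^sub>m 1\<^sub>m k + 0 \<cdot>\<^sub>m 1\<^sub>m k))"
    unfolding psd_mat_def
  proof (intro conjI ballI)
    show "1 \<cdot>\<^sub>m X + (complex_of_real (-\<mu>) \<cdot>\<^sub>m 1\<^sub>m k + 0 \<cdot>\<^sub>m 1\<^sub>m k) \<in> carrier_mat k k" using Xc by simp
    fix v :: "complex Matrix.vec" assume v: "v \<in> carrier_vec k"
    have q: "quad_form (1 \<cdot>\<^sub>m X + (complex_of_real (-\<mu>) \<cdot>\<^sub>m 1\<^sub>m k + 0 \<cdot>\<^sub>m 1\<^sub>m k)) v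
      = complex_of_real (\<Sum>j<k. (d j - \<mu>) * wt U v j)"
    proof -
      have "quad_form (1 \<cdot>\<^sub>m X + (complex_of_real (-\<mu>) \<cdot>\<^sub>m 1\<^sub>m k + 0 \<cdot>\<^sub>m 1\<^sub>m k)) v
        = quad_form X v + complex_of_real (-\<mu>) * quad_form (1\<^sub>m k) v"
        using quad_lin3[OF Xc one_carrier_mat one_carrier_mat v] by simp
      also have "\<dots> = complex_of_real ((\<Sum>j<k. d j * wt U v j) - \<mu> * (\<Sum>j<k. wt U v j))"
        unfolding X_def quad_diag[OF Uc v] quad_one[OF v] wt_sum[OF U v, symmetric] wt_def
        by (simp add: mult.commute)
      also have "\<dots> = complex_of_real (\<Sum>j<k. (d j - \<mu>) * wt U v j)"
        by (simp add: sum_distrib_left sum_subtractf left_diff_distrib)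
      finally show ?thesis .
    qed
    have "(\<Sum>j<k. (d j - \<mu>) * wt U v j) \<ge> 0"
      using \<mu>le wt_nonneg by (intro sum_nonneg mult_nonneg_nonneg) simp_all
    then show "0 \<le> Re (quad_form (1 \<cdot>\<^sub>m X + (complex_of_real (-\<mu>) \<cdot>\<^sub>m 1\<^sub>m k + 0 \<cdot>\<^sub>m 1\<^sub>m k)) v)"
      unfolding q by simp
    show "Im (quad_form (1 \<cdot>\<^sub>m X + (complex_of_real (-\<mu>) \<cdot>\<^sub>m 1\<^sub>m k + 0 \<cdot>\<^sub>m 1\<^sub>m k)) v) = 0"
      unfolding q by simp
  qed
  have ImgD: "\<Phi> (1 \<cdot>\<^sub>m X + (complex_of_real (-\<mu>) \<cdot>\<^sub>m 1\<^sub>m k + 0 \<cdot>\<^sub>m 1\<^sub>m k))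
     = 1 \<cdot>\<^sub>m \<Phi> X + (complex_of_real (-\<mu>) \<cdot>\<^sub>m 1\<^sub>m n + 0 \<cdot>\<^sub>m 1\<^sub>m n)"
    using phi_lin3[OF L Xc one_carrier_mat one_carrier_mat] Un unfolding unital_mat_map_def by simp
  have psdI: "psd_mat n (1 \<cdot>\<^sub>m \<Phi> X + (complex_of_real (-\<mu>) \<cdot>\<^sub>m 1\<^sub>m n + 0 \<cdot>\<^sub>m 1\<^sub>m n))"
    using P psdD ImgD unfolding positive_mat_map_def by metis
  show ?thesis unfolding X_def[symmetric] pd_mat_def
  proof (intro conjI ballI impI PXc)
    fix v :: "complex Matrix.vec" assume v: "v \<in> carrier_vec n" and v0: "v \<noteq> 0\<^sub>v n"
    have "quad_form (1 \<cdot>\<^sub>m \<Phi> X + (complex_of_real (-\<mu>) \<cdot>\<^sub>m 1\<^sub>m n + 0 \<cdot>\<^sub>m 1\<^sub>m n)) v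
       = quad_form (\<Phi> X) v - complex_of_real (\<mu> * (\<Sum>l<n. (cmod (v $ l))^2))"
      using quad_lin3[OF PXc one_carrier_mat one_carrier_mat v] quad_one[OF v] by simp
    moreover have "Im (quad_form (1 \<cdot>\<^sub>m \<Phi> X + (complex_of_real (-\<mu>) \<cdot>\<^sub>m 1\<^sub>m n + 0 \<cdot>\<^sub>m 1\<^sub>m n)) v) = 0 \<and>
      0 \<le> Re (quad_form (1 \<cdot>\<^sub>m \<Phi> X + (complex_of_real (-\<mu>) \<cdot>\<^sub>m 1\<^sub>m n + 0 \<cdot>\<^sub>m 1\<^sub>m n)) v)"
      using psdI v unfolding psd_mat_def by blast
    moreover have "\<mu> * (\<Sum>l<n. (cmod (v $ l))^2) > 0" using \<mu>pos pos_sum_sq[OF v v0] by simp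
    ultimately have "Im (quad_form (\<Phi> X) v) = 0 \<and> 0 < Re (quad_form (\<Phi> X) v)" by simp
    then show "Im (quad_form (\<Phi> X) v) = 0" "0 < Re (quad_form (\<Phi> X) v)" by simp_all
  qed
qed

lemma powr_convex_neg: assumes "r \<le> 0" shows "convex_on {0<..} (\<lambda>x::real. x powr r)"
proof (rule f''_ge0_imp_convex[where f' = "\<lambda>x. r * x powr (r - 1)" and f'' = "\<lambda>x. r * ((r - 1) * x powr (r - 1 - 1))"])
  show "convex {0::real<..}" by simp
next
  fix x :: real assume x: "x \<in> {0<..}"
  show "DERIV (\<lambda>x. x powr r) x :> r * x powr (r - 1)"
    using x by (auto intro!: derivative_eq_intros)
  show "DERIV (\<lambda>x. r * x powr (r - 1)) x :> r * ((r - 1) * x powr (r - 1 - 1))"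
    using x by (auto intro!: derivative_eq_intros)
  have "r * (r - 1) \<ge> 0" using assms by (simp add: mult_nonpos_nonpos)
  then show "0 \<le> r * ((r - 1) * x powr (r - 1 - 1))"
    using x by (simp add: mult.assoc[symmetric])
qed

lemma final_scalar:
  fixes g :: "real \<Rightarrow> real" and n :: nat
  assumes g: "convex_on {0<..} g" and s: "0 \<le> s" "s \<le> 1"
    and x: "\<forall>j<n. x j > 0" and y: "\<forall>j<n. y j > 0"
    and wX: "\<forall>i<n. \<forall>j<n. wX i j \<ge> 0" and wY: "\<forall>i<n. \<forall>j<n. wY i j \<ge> 0"
    and rX: "\<forall>i<n. (\<Sum>j<n. wX i j) = 1" and rY: "\<forall>i<n. (\<Sum>j<n. wY i j) = 1"
    and cX: "\<forall>j<n. (\<Sum>i<n. wX i j) = 1" and cY: "\<forall>j<n. (\<Sum>i<n. wY i j) = 1"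
    and H: "\<forall>i<n. g (z i) \<le> g ((1 - s) * (\<Sum>j<n. wX i j * x j) + s * (\<Sum>j<n. wY i j * y j))"
  shows "(\<Sum>i<n. g (z i)) \<le> (1 - s) * (\<Sum>j<n. g (x j)) + s * (\<Sum>j<n. g (y j))"
proof -
  have jen: "g (\<Sum>j<n. w i j * v j) \<le> (\<Sum>j<n. w i j * g (v j))" and pos: "(\<Sum>j<n. w i j * v j) > 0"
    if i: "i < n" and w: "\<forall>i<n. \<forall>j<n. w i j \<ge> 0" and r: "\<forall>i<n. (\<Sum>j<n. w i j) = 1" and v: "\<forall>j<n. v j > 0"
    for w v i
  proof -
    have ne: "{..<n} \<noteq> {}" using i by auto
    show "g (\<Sum>j<n. w i j * v j) \<le> (\<Sum>j<n. w i j * g (v j))"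
      using convex_on_sum[OF finite_lessThan ne g, of "w i" v] r w v i by simp
    have "(\<Sum>j<n. w i j *\<^sub>R v j) \<in> {0<..}"
      by (rule convex_sum[OF finite_lessThan]) (use r w v i in simp_all)
    then show "(\<Sum>j<n. w i j * v j) > 0" by simp
  qed
  have step: "g (z i) \<le> (1 - s) * (\<Sum>j<n. wX i j * g (x j)) + s * (\<Sum>j<n. wY i j * g (y j))" if i: "i < n" for i
  proof -
    have "g (z i) \<le> g ((1 - s) * (\<Sum>j<n. wX i j * x j) + s * (\<Sum>j<n. wY i j * y j))" using H i by simp
    also have "\<dots> \<le> (1 - s) * g (\<Sum>j<n. wX i j * x j) + s * g (\<Sum>j<n. wY i j * y j)"
      using convex_onD[OF g, of s "\<Sum>j<n. wX i j * x j" "\<Sum>j<n. wY i j * y j"] s pos[OF i wX rX x] pos[OF i wY rY y] by simp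
    also have "\<dots> \<le> (1 - s) * (\<Sum>j<n. wX i j * g (x j)) + s * (\<Sum>j<n. wY i j * g (y j))"
      using jen[OF i wX rX x] jen[OF i wY rY y] s by (intro add_mono mult_left_mono) simp_all
    finally show ?thesis .
  qed
  have "(\<Sum>i<n. g (z i)) \<le> (\<Sum>i<n. (1 - s) * (\<Sum>j<n. wX i j * g (x j)) + s * (\<Sum>j<n. wY i j * g (y j)))"
    by (rule sum_mono) (use step in simp)
  also have "\<dots> = (1 - s) * (\<Sum>j<n. (\<Sum>i<n. wX i j) * g (x j)) + s * (\<Sum>j<n. (\<Sum>i<n. wY i j) * g (y j))"
  proof -
    have sw: "(\<Sum>i<n. \<Sum>j<n. w i j * h j) = (\<Sum>j<n. (\<Sum>i<n. w i j) * h j)" for w :: "nat \<Rightarrow> nat \<Rightarrow> real" and h :: "nat \<Rightarrow> real"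
      by (simp add: sum_distrib_right) (rule sum.swap)
    show ?thesis by (simp only: sum.distrib sum_distrib_left[symmetric] sw)
  qed
  also have "\<dots> = (1 - s) * (\<Sum>j<n. g (x j)) + s * (\<Sum>j<n. g (y j))"
    using cX cY by simp
  finally show ?thesis .
qed

lemma mult_cnj_self: "z * cnj z = complex_of_real ((cmod z)^2)"
  by (rule complex_norm_square[symmetric])

lemma unitary_row: assumes U: "unitary_mat n U" and j: "j < n"
  shows "(\<Sum>i<n. (cmod (U $$ (j,i)))^2) = 1"
proof -
  have Uc: "U \<in> carrier_mat n n" using U unitary_carrier by blast
  have "(U * mat_adjoint U) $$ (j,j) = (\<Sum>i<n. U $$ (j,i) * mat_adjoint U $$ (i,j))"
    by (rule mult_entry[OF Uc adj_carrier[OF Uc] j j])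
  also have "\<dots> = (\<Sum>i<n. complex_of_real ((cmod (U $$ (j,i)))^2))"
    using Uc j by (intro sum.cong refl) (simp add: mult_cnj_self)
  finally have "complex_of_real (\<Sum>i<n. (cmod (U $$ (j,i)))^2) = 1"
    using U j unfolding unitary_mat_def by simp
  then show ?thesis by (metis of_real_eq_1_iff)
qed

lemma unitary_col: assumes U: "unitary_mat n U" and j: "j < n"
  shows "(\<Sum>i<n. (cmod (U $$ (i,j)))^2) = 1"
proof -
  have Uc: "U \<in> carrier_mat n n" using U unitary_carrier by blast
  have "(\<Sum>i<n. (cmod (mat_adjoint U $$ (j,i)))^2) = 1" by (rule unitary_row[OF unitary_adj[OF U] j])
  moreover have "(\<Sum>i<n. (cmod (mat_adjoint U $$ (j,i)))^2) = (\<Sum>i<n. (cmod (U $$ (i,j)))^2)"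
    using Uc j by (intro sum.cong refl) simp
  ultimately show ?thesis by simp
qed

lemma quad_decomp_re: assumes U: "unitary_mat n U" and X: "X = U * real_diag_mat n x * mat_adjoint U"
  and u: "u \<in> carrier_vec n"
  shows "quad_form X u = complex_of_real (\<Sum>j<n. wt U u j * x j)"
proof -
  have Uc: "U \<in> carrier_mat n n" using U unitary_carrier by blast
  show ?thesis unfolding X quad_diag[OF Uc u] wt_def by (simp add: mult.commute)
qed

lemma op_sign:
  assumes td: "three_decomp k UA UB UC a b c A B C s"
    and p: "-1 \<le> p" "p \<le> 1" "p \<noteq> 0" and u: "u \<in> carrier_vec k"
  shows "(if p > 0 then 1 else -1) * ((\<Sum>j<k. wt UC u j * c j powr p) - (1 - s) * (\<Sum>j<k. wt UA u j * a j powr p)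
     - s * (\<Sum>j<k. wt UB u j * b j powr p)) \<ge> 0"
proof -
  interpret three_decomp k UA UB UC a b c A B C s by (rule td)
  consider "p = 1" | "0 < p \<and> p < 1" | "-1 < p \<and> p < 0" | "p = -1" using p by linarith
  then show ?thesis
  proof cases
    case 1
    have Ac: "A \<in> carrier_mat k k" unfolding A using UA unitary_carrier by (simp add: mult_carrier_sq)
    have Bc: "B \<in> carrier_mat k k" unfolding B using UB unitary_carrier by (simp add: mult_carrier_sq)
    have e: "(\<Sum>j<k. wt U u j * x j powr 1) = (\<Sum>j<k. wt U u j * x j)" if "\<forall>j<k. x j > 0" for U x
    proof (intro sum.cong refl)
      fix j assume "j \<in> {..<k}" then have "x j > 0" using that by simp
      then show "wt U u j * x j powr 1 = wt U u j * x j" by simp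
    qed
    have "quad_form C u = complex_of_real (1 - s) * quad_form A u + complex_of_real s * quad_form B u"
      unfolding CAB by (rule quad_lin[OF Ac Bc u])
    then have "complex_of_real (\<Sum>j<k. wt UC u j * c j) = complex_of_real ((1 - s) * (\<Sum>j<k. wt UA u j * a j) + s * (\<Sum>j<k. wt UB u j * b j))"
      unfolding quad_decomp_re[OF UA A u] quad_decomp_re[OF UB B u] quad_decomp_re[OF UC C u]
      by simp
    then have "(\<Sum>j<k. wt UC u j * c j) = (1 - s) * (\<Sum>j<k. wt UA u j * a j) + s * (\<Sum>j<k. wt UB u j * b j)"
      by (simp only: of_real_eq_iff)
    then show ?thesis using 1 e[OF a] e[OF b] e[OF c] by simp
  next
    case 2
    then show ?thesis using pow_pos[of p u] u by simp
  next
    case 3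
    then show ?thesis using pow_neg[of p u] u by simp
  next
    case 4
    have e: "(\<Sum>j<k. wt U u j * x j powr p) = (\<Sum>j<k. wt U u j / (x j + 0))" if "\<forall>j<k. x j > 0" for U x
    proof (intro sum.cong refl)
      fix j assume "j \<in> {..<k}" then have "x j > 0" using that by simp
      then show "wt U u j * x j powr p = wt U u j / (x j + 0)" using 4 by (simp add: powr_minus divide_inverse)
    qed
    show ?thesis using inv_conv[of 0 u] u 4 e[OF a] e[OF b] e[OF c] by simp
  qed
qed

lemma pd_comb: assumes pdA: "pd_mat k A" and pdB: "pd_mat k B" and t: "0 \<le> t" "t \<le> 1"
  shows "pd_mat k (complex_of_real (1 - t) \<cdot>\<^sub>m A + complex_of_real t \<cdot>\<^sub>m B)"
proof -
  have Ac: "A \<in> carrier_mat k k" and Bc: "B \<in> carrier_mat k k" using pdA pdB unfolding pd_mat_def by blast+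
  show ?thesis unfolding pd_mat_def
  proof (intro conjI ballI impI)
    show "complex_of_real (1 - t) \<cdot>\<^sub>m A + complex_of_real t \<cdot>\<^sub>m B \<in> carrier_mat k k" using Ac Bc by simp
    fix v :: "complex Matrix.vec" assume v: "v \<in> carrier_vec k" and v0: "v \<noteq> 0\<^sub>v k"
    have q: "quad_form (complex_of_real (1 - t) \<cdot>\<^sub>m A + complex_of_real t \<cdot>\<^sub>m B) v
      = complex_of_real (1 - t) * quad_form A v + complex_of_real t * quad_form B v" by (rule quad_lin[OF Ac Bc v])
    have qa: "Im (quad_form A v) = 0" "Re (quad_form A v) > 0" using pdA v v0 unfolding pd_mat_def by blast+
    have qb: "Im (quad_form B v) = 0" "Re (quad_form B v) > 0" using pdB v v0 unfolding pd_mat_def by blast+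
    show "Im (quad_form (complex_of_real (1 - t) \<cdot>\<^sub>m A + complex_of_real t \<cdot>\<^sub>m B) v) = 0"
      unfolding q using qa qb by simp
    have "(1 - t) * Re (quad_form A v) + t * Re (quad_form B v) > 0"
    proof (cases "t = 0")
      case True then show ?thesis using qa by simp
    next
      case False
      then have "t * Re (quad_form B v) > 0" using t qb by simp
      moreover have "(1 - t) * Re (quad_form A v) \<ge> 0" using t qa by simp
      ultimately show ?thesis by linarith
    qed
    then show "Re (quad_form (complex_of_real (1 - t) \<cdot>\<^sub>m A + complex_of_real t \<cdot>\<^sub>m B) v) > 0"
      unfolding q by simp
  qed
qed

theorem corollary3p8:
  fixes k n :: nat and \<Phi> :: "complex mat \<Rightarrow> complex mat" and p :: real
  assumes "linear_mat_map k n \<Phi>" and "positive_mat_map k n \<Phi>" and "unital_mat_map k n \<Phi>"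
    and "-1 \<le> p" and "p \<le> 1" and "p \<noteq> 0"
  shows "\<forall>A B t. pd_mat k A \<longrightarrow> pd_mat k B \<longrightarrow> 0 \<le> t \<longrightarrow> t \<le> 1 \<longrightarrow>
    Re (trace_mat (mat_rpow (\<Phi> (mat_rpow ((1 - t) \<cdot>\<^sub>m A + t \<cdot>\<^sub>m B) p)) (-1/p)))
      \<le> (1 - t) * Re (trace_mat (mat_rpow (\<Phi> (mat_rpow A p)) (-1/p)))
        + t * Re (trace_mat (mat_rpow (\<Phi> (mat_rpow B p)) (-1/p)))"
proof (intro allI impI)
  note L = assms(1) and P = assms(2) and Un = assms(3) and p = assms(4-6)
  fix A B :: "complex mat" and t :: real
  assume pdA: "pd_mat k A" and pdB: "pd_mat k B" and t0: "0 \<le> t" and t1: "t \<le> 1"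
  define C where "C = complex_of_real (1 - t) \<cdot>\<^sub>m A + complex_of_real t \<cdot>\<^sub>m B"
  have pdC: "pd_mat k C" unfolding C_def by (rule pd_comb[OF pdA pdB t0 t1])
  obtain UA a where UA: "unitary_mat k UA" and a: "\<forall>j<k. a j > 0" and Ad: "A = UA * real_diag_mat k a * mat_adjoint UA"
    using pd_decomp[OF pdA] by blast
  obtain UB b where UB: "unitary_mat k UB" and b: "\<forall>j<k. b j > 0" and Bd: "B = UB * real_diag_mat k b * mat_adjoint UB"
    using pd_decomp[OF pdB] by blast
  obtain UC c where UC: "unitary_mat k UC" and c: "\<forall>j<k. c j > 0" and Cd: "C = UC * real_diag_mat k c * mat_adjoint UC"
    using pd_decomp[OF pdC] by blast
  have td: "three_decomp k UA UB UC a b c A B C t"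
    by (unfold_locales) (use UA a Ad UB b Bd UC c Cd C_def t0 t1 in simp_all)
  define sg :: real where "sg = (if p > 0 then 1 else -1)"
  note rA = rpow_decomp[OF UA a Ad, of p] and rB = rpow_decomp[OF UB b Bd, of p] and rC = rpow_decomp[OF UC c Cd, of p]
  define X where "X = \<Phi> (mat_rpow A p)"
  define Y where "Y = \<Phi> (mat_rpow B p)"
  define Z where "Z = \<Phi> (mat_rpow C p)"
  have pdX: "pd_mat n X" unfolding X_def rA(1) by (rule pd_image[OF L P Un UA rA(2)])
  have pdY: "pd_mat n Y" unfolding Y_def rB(1) by (rule pd_image[OF L P Un UB rB(2)])
  have pdZ: "pd_mat n Z" unfolding Z_def rC(1) by (rule pd_image[OF L P Un UC rC(2)])
  obtain UX x where UX: "unitary_mat n UX" and x: "\<forall>j<n. x j > 0" and Xd: "X = UX * real_diag_mat n x * mat_adjoint UX"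
    using pd_decomp[OF pdX] by blast
  obtain UY y where UY: "unitary_mat n UY" and y: "\<forall>j<n. y j > 0" and Yd: "Y = UY * real_diag_mat n y * mat_adjoint UY"
    using pd_decomp[OF pdY] by blast
  obtain UZ z where UZ: "unitary_mat n UZ" and z: "\<forall>j<n. z j > 0" and Zd: "Z = UZ * real_diag_mat n z * mat_adjoint UZ"
    using pd_decomp[OF pdZ] by blast
  have UXc: "UX \<in> carrier_mat n n" using UX unitary_carrier by blast
  have UYc: "UY \<in> carrier_mat n n" using UY unitary_carrier by blast
  have UZc: "UZ \<in> carrier_mat n n" using UZ unitary_carrier by blast
  have Xc: "X \<in> carrier_mat n n" and Yc: "Y \<in> carrier_mat n n" and Zc: "Z \<in> carrier_mat n n"
    using pdX pdY pdZ unfolding pd_mat_def by blast+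
  define r where "r = -1/p"
  have trX: "Re (trace_mat (mat_rpow X r)) = (\<Sum>j<n. x j powr r)"
    unfolding mat_rpow_eq[OF UX x Xd] trace_decomp[OF UX] by simp
  have trY: "Re (trace_mat (mat_rpow Y r)) = (\<Sum>j<n. y j powr r)"
    unfolding mat_rpow_eq[OF UY y Yd] trace_decomp[OF UY] by simp
  have trZ: "Re (trace_mat (mat_rpow Z r)) = (\<Sum>j<n. z j powr r)"
    unfolding mat_rpow_eq[OF UZ z Zd] trace_decomp[OF UZ] by simp
  define MX where "MX = mat_adjoint UX * UZ"
  define MY where "MY = mat_adjoint UY * UZ"
  have MX: "unitary_mat n MX" unfolding MX_def by (rule unitary_mult[OF unitary_adj[OF UX] UZ])
  have MY: "unitary_mat n MY" unfolding MY_def by (rule unitary_mult[OF unitary_adj[OF UY] UZ])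
  have MXc: "MX \<in> carrier_mat n n" using MX unitary_carrier by blast
  have MYc: "MY \<in> carrier_mat n n" using MY unitary_carrier by blast
  define wX where "wX i j = (cmod (MX $$ (j,i)))^2" for i j
  define wY where "wY i j = (cmod (MY $$ (j,i)))^2" for i j
  have convg: "convex_on {0<..} (\<lambda>v. v powr r)"
  proof (cases "p > 0")
    case True then have "r \<le> 0" unfolding r_def by simp
    then show ?thesis by (rule powr_convex_neg)
  next
    case False then have "p < 0" using p by simp
    then have "r \<ge> 1" unfolding r_def using p by (simp add: field_simps)
    then show ?thesis by (rule powr_convex)
  qed
  have H: "\<forall>i<n. z i powr r \<le> ((1 - t) * (\<Sum>j<n. wX i j * x j) + t * (\<Sum>j<n. wY i j * y j)) powr r"
  proof (intro allI impI)
    fix i assume i: "i < n"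
    define u where "u = UZ *\<^sub>v unit_vec n i"
    have u: "u \<in> carrier_vec n" unfolding u_def using UZc by simp
    have yZ: "mat_adjoint UZ *\<^sub>v u = unit_vec n i"
      unfolding u_def using UZ UZc unfolding unitary_mat_def by (simp add: assoc_mult_mat_vec[symmetric, of _ n n _ n])
    have u0: "u \<noteq> 0\<^sub>v n"
    proof
      assume "u = 0\<^sub>v n"
      then have "(mat_adjoint UZ *\<^sub>v u) $ i = 0" using UZc i by simp
      then show False using yZ i by simp
    qed
    have yX: "(mat_adjoint UX *\<^sub>v u) $ j = MX $$ (j,i)" if "j < n" for j
    proof -
      have "mat_adjoint UX *\<^sub>v u = MX *\<^sub>v unit_vec n i"
        unfolding u_def MX_def using UXc UZc by (simp add: assoc_mult_mat_vec[of _ n n _ n])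
      then show ?thesis using mv_unit[OF MXc i that] by simp
    qed
    have yY: "(mat_adjoint UY *\<^sub>v u) $ j = MY $$ (j,i)" if "j < n" for j
    proof -
      have "mat_adjoint UY *\<^sub>v u = MY *\<^sub>v unit_vec n i"
        unfolding u_def MY_def using UYc UZc by (simp add: assoc_mult_mat_vec[of _ n n _ n])
      then show ?thesis using mv_unit[OF MYc i that] by simp
    qed
    have qX: "quad_form X u = complex_of_real (\<Sum>j<n. wX i j * x j)"
    proof -
      have "quad_form X u = complex_of_real (\<Sum>j<n. wt UX u j * x j)" by (rule quad_decomp_re[OF UX Xd u])
      also have "(\<Sum>j<n. wt UX u j * x j) = (\<Sum>j<n. wX i j * x j)"
        by (intro sum.cong refl) (simp add: wt_def wX_def yX)
      finally show ?thesis .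
    qed
    have qY: "quad_form Y u = complex_of_real (\<Sum>j<n. wY i j * y j)"
    proof -
      have "quad_form Y u = complex_of_real (\<Sum>j<n. wt UY u j * y j)" by (rule quad_decomp_re[OF UY Yd u])
      also have "(\<Sum>j<n. wt UY u j * y j) = (\<Sum>j<n. wY i j * y j)"
        by (intro sum.cong refl) (simp add: wt_def wY_def yY)
      finally show ?thesis .
    qed
    have qZ: "quad_form Z u = complex_of_real (z i)"
    proof -
      have "quad_form Z u = complex_of_real (\<Sum>j<n. wt UZ u j * z j)" by (rule quad_decomp_re[OF UZ Zd u])
      also have "(\<Sum>j<n. wt UZ u j * z j) = wt UZ u i * z i"
        by (rule sum_one'[OF i]) (use yZ i in \<open>simp add: wt_def\<close>)
      also have "wt UZ u i = 1" unfolding wt_def yZ using i by simp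
      finally show ?thesis by simp
    qed
    have xi: "(\<Sum>j<n. wX i j * x j) > 0" using pdX u u0 qX unfolding pd_mat_def by force
    have eta: "(\<Sum>j<n. wY i j * y j) > 0" using pdY u u0 qY unfolding pd_mat_def by force
    define D where "D = complex_of_real sg \<cdot>\<^sub>m mat_rpow C p + (complex_of_real (- sg * (1 - t)) \<cdot>\<^sub>m mat_rpow A p + complex_of_real (- sg * t) \<cdot>\<^sub>m mat_rpow B p)"
    have psdD: "psd_mat k D" unfolding psd_mat_def
    proof (intro conjI ballI)
      show "D \<in> carrier_mat k k" unfolding D_def using rA(3) rB(3) rC(3) by simp
      fix v :: "complex Matrix.vec" assume v: "v \<in> carrier_vec k"
      have "quad_form D v = complex_of_real (sg * ((\<Sum>j<k. wt UC v j * c j powr p) - (1 - t) * (\<Sum>j<k. wt UA v j * a j powr p)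
          - t * (\<Sum>j<k. wt UB v j * b j powr p)))"
        unfolding D_def quad_lin3[OF rC(3) rA(3) rB(3) v] rpow_quad[OF UA a Ad v] rpow_quad[OF UB b Bd v] rpow_quad[OF UC c Cd v]
        by (simp add: algebra_simps)
      moreover have "sg * ((\<Sum>j<k. wt UC v j * c j powr p) - (1 - t) * (\<Sum>j<k. wt UA v j * a j powr p)
          - t * (\<Sum>j<k. wt UB v j * b j powr p)) \<ge> 0"
        unfolding sg_def by (rule op_sign[OF td p v])
      ultimately show "Im (quad_form D v) = 0" "0 \<le> Re (quad_form D v)" by simp_all
    qed
    have "\<Phi> D = complex_of_real sg \<cdot>\<^sub>m Z + (complex_of_real (- sg * (1 - t)) \<cdot>\<^sub>m X + complex_of_real (- sg * t) \<cdot>\<^sub>m Y)"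
      unfolding D_def X_def Y_def Z_def by (rule phi_lin3[OF L rC(3) rA(3) rB(3)])
    then have psdPD: "psd_mat n (complex_of_real sg \<cdot>\<^sub>m Z + (complex_of_real (- sg * (1 - t)) \<cdot>\<^sub>m X + complex_of_real (- sg * t) \<cdot>\<^sub>m Y))"
      using P psdD unfolding positive_mat_map_def by metis
    have "quad_form (complex_of_real sg \<cdot>\<^sub>m Z + (complex_of_real (- sg * (1 - t)) \<cdot>\<^sub>m X + complex_of_real (- sg * t) \<cdot>\<^sub>m Y)) u
       = complex_of_real (sg * (z i - (1 - t) * (\<Sum>j<n. wX i j * x j) - t * (\<Sum>j<n. wY i j * y j)))"
      unfolding quad_lin3[OF Zc Xc Yc u] qX qY qZ by (simp add: algebra_simps)
    then have sgi: "sg * (z i - (1 - t) * (\<Sum>j<n. wX i j * x j) - t * (\<Sum>j<n. wY i j * y j)) \<ge> 0"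
      using psdPD u unfolding psd_mat_def by force
    define m where "m = (1 - t) * (\<Sum>j<n. wX i j * x j) + t * (\<Sum>j<n. wY i j * y j)"
    have mpos: "m > 0"
    proof (cases "t = 0")
      case True then show ?thesis unfolding m_def using xi by simp
    next
      case False
      then have "t * (\<Sum>j<n. wY i j * y j) > 0" using t0 eta by simp
      moreover have "(1 - t) * (\<Sum>j<n. wX i j * x j) \<ge> 0" using t1 xi by simp
      ultimately show ?thesis unfolding m_def by linarith
    qed
    have zi: "z i > 0" using z i by simp
    have "z i powr r \<le> m powr r"
    proof (cases "p > 0")
      case True
      then have "m \<le> z i" using sgi unfolding sg_def m_def by simp
      moreover have "r \<le> 0" unfolding r_def using True by simp
      ultimately show ?thesis using powr_mono2'[of r m "z i"] mpos by simp
    next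
      case False
      then have "z i \<le> m" using sgi unfolding sg_def m_def by simp
      moreover have "r \<ge> 0" unfolding r_def using False p by simp
      ultimately show ?thesis using powr_mono2[of r "z i" m] zi by simp
    qed
    then show "z i powr r \<le> ((1 - t) * (\<Sum>j<n. wX i j * x j) + t * (\<Sum>j<n. wY i j * y j)) powr r"
      unfolding m_def .
  qed
  have fin: "(\<Sum>i<n. z i powr r) \<le> (1 - t) * (\<Sum>j<n. x j powr r) + t * (\<Sum>j<n. y j powr r)"
  proof (rule final_scalar[OF convg t0 t1 x y])
    show "\<forall>i<n. \<forall>j<n. wX i j \<ge> 0" "\<forall>i<n. \<forall>j<n. wY i j \<ge> 0" unfolding wX_def wY_def by simp_all
    show "\<forall>i<n. (\<Sum>j<n. wX i j) = 1" unfolding wX_def using unitary_col[OF MX] by simp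
    show "\<forall>i<n. (\<Sum>j<n. wY i j) = 1" unfolding wY_def using unitary_col[OF MY] by simp
    show "\<forall>j<n. (\<Sum>i<n. wX i j) = 1" unfolding wX_def using unitary_row[OF MX] by simp
    show "\<forall>j<n. (\<Sum>i<n. wY i j) = 1" unfolding wY_def using unitary_row[OF MY] by simp
  qed (rule H)
  show "Re (trace_mat (mat_rpow (\<Phi> (mat_rpow ((1 - complex_of_real t) \<cdot>\<^sub>m A + complex_of_real t \<cdot>\<^sub>m B) p)) (-1/p)))
      \<le> (1 - t) * Re (trace_mat (mat_rpow (\<Phi> (mat_rpow A p)) (-1/p)))
        + t * Re (trace_mat (mat_rpow (\<Phi> (mat_rpow B p)) (-1/p)))"
  proof -
    have Ceq: "(1 - complex_of_real t) \<cdot>\<^sub>m A + complex_of_real t \<cdot>\<^sub>m B = C" unfolding C_def by simp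
    show ?thesis unfolding Ceq X_def[symmetric] Y_def[symmetric] Z_def[symmetric] r_def[symmetric] trX trY trZ by (rule fin)
  qed
qed

end
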